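(* Suppose that $j$ satisfies the following: (i) $j$ is $C^1$ on $U$, each derivative $Dj(\phi)$ extends to a linear map $D_ej(\phi):C([-h,0],\mathbb{R}^2)\to\mathbb{R}$ and $(\phi,\chi)\mapsto D_ej(\phi)\chi$ is continuous on $U\times C([-h,0],\mathbb{R}^2)$; (ii) for every bounded $B\subset U_+$ there is $L_B\ge 0$ with $|j(\phi)-j(\chi)|\le L_B\|\phi-\chi\|_0$ for all $\phi,\chi\in B$; (iii) $j\ge0$ on $U_+$; (iv) $j(B_1\times B_2)$ is bounded whenever $B_1\times B_2\subset U_+$ and $B_1$ is bounded. Suppose that $q$ is bounded and $C^1$, that $$\forall\,\varepsilon>0\;\exists\,\delta>0\ \text{such that}\ j(\varphi,\psi)\le\varepsilon\ \ \forall\,(\varphi,\psi)\in U_+\ \text{with}\ \|\varphi\|_0\le\delta ,$$ that $q(0)>0$, that there exist $\delta>0$ and $z^*\ge0$ with $q(z)\le-\delta$ for all $z\ge z^*$, and that for every $K>0$ there is $L=L(K)$ with $j(\varphi,\psi)\ge K$ whenever $(\varphi,\psi)\in U_+$ and $\min\varphi\ge L$. Define $\rho_1(\varphi,\psi)=\varphi(0)$ and $\rho_m(\varphi,\psi)=\min\{\varphi(0),\psi(0)\}$. Then the semiflow $S_+$ associated to $w'(t)=q(v(t))w(t)$, $v'(t)=j(w_t,v_t)-\mu v(t)$ on $X_+$ is uniformly $\rho$-persistent for both $\rho=\rho_1$ and $\rho=\rho_m$ (i.e. there is $\varepsilon>0$ with $\liminf_{t\to\infty}\rho(S_+(t,y))>\varepsilon$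 whenever $y\in X_+$, $\rho(y)>0$). In addition, there is a nonempty compact set $B\subset X_+$ with $d(S_+(t,x),B)\to0$ as $t\to\infty$ for all $x\in X_+$, and $S_+$ is point dissipative. Finally, there exists at least one pair of functions with positive constant values satisfying $F(\varphi,\psi)=0$, and any positive zero of $q$ corresponds to one such pair.
   Context: Let $h>0$, $R_-<0$, $I=(R_-,\infty)$, $q:I\to\mathbb{R}$, $\mu>0$, $U=C^1([-h,0],\mathbb{R})\times C^1([-h,0],I)$, $j:U\to\mathbb{R}$, $U_+=C^1([-h,0],\mathbb{R}_+^2)$, $\|\cdot\|_0$ the sup-norm and $\|\phi\|_1=\|\phi\|_0+\|\phi'\|_0$ (the metric $d$ on $X_+$ is induced by $\|\cdot\|_1$); $x_t(s)=x(t+s)$, $s\in[-h,0]$. Define $F(\varphi,\psi)=(q(\psi(0))\varphi(0),\,j(\varphi,\psi)-\mu\psi(0))$ and $X_+=\{\phi\in C^1([-h,0],\mathbb{R}_+^2):\phi'(0)=F(\phi)\}$. Under these assumptions solutions exist globally on $X_+$ and define a continuous semiflow $S_+(t,\phi)=(w,v)^\phi_t$ on $\mathbb{R}_+\times X_+$. Point dissipative means there is a bounded set attracting every point of $X_+$. *)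

theory Defs
  imports "HOL-Analysis.Analysis"
begin

text \<open>States are pairs (phi, psi) of real functions; only their values on [-h,0] matter.\<close>
type_synonym st = "(real \<Rightarrow> real) \<times> (real \<Rightarrow> real)"

definition padd :: "st \<Rightarrow> st \<Rightarrow> st" where
  "padd x y = ((\<lambda>s. fst x s + fst y s), (\<lambda>s. snd x s + snd y s))"

definition psub :: "st \<Rightarrow> st \<Rightarrow> st" where
  "psub x y = ((\<lambda>s. fst x s - fst y s), (\<lambda>s. snd x s - snd y s))"

definition pscale :: "real \<Rightarrow> st \<Rightarrow> st" where
  "pscale c x = ((\<lambda>s. c * fst x s), (\<lambda>s. c * snd x s))"

definition der :: "real \<Rightarrow> (real \<Rightarrow> real) \<Rightarrow> real \<Rightarrow> real" where
  "der h f s = (THE d. (f has_real_derivative d) (at s within {-h..0}))"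

definition C1s :: "real \<Rightarrow> (real \<Rightarrow> real) \<Rightarrow> bool" where
  "C1s h f \<longleftrightarrow> (\<exists>f'. (\<forall>s\<in>{-h..0}. (f has_real_derivative f' s) (at s within {-h..0}))
                    \<and> continuous_on {-h..0} f')"

definition Cont :: "real \<Rightarrow> st \<Rightarrow> bool" where
  "Cont h x \<longleftrightarrow> continuous_on {-h..0} (fst x) \<and> continuous_on {-h..0} (snd x)"

definition norm0s :: "real \<Rightarrow> (real \<Rightarrow> real) \<Rightarrow> real" where
  "norm0s h f = (SUP s\<in>{-h..0}. \<bar>f s\<bar>)"

definition norm1s :: "real \<Rightarrow> (real \<Rightarrow> real) \<Rightarrow> real" where
  "norm1s h f = norm0s h f + norm0s h (der h f)"

definition norm0 :: "real \<Rightarrow> st \<Rightarrow> real" where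
  "norm0 h x = max (norm0s h (fst x)) (norm0s h (snd x))"

definition norm1 :: "real \<Rightarrow> st \<Rightarrow> real" where
  "norm1 h x = norm0 h x + norm0 h (der h (fst x), der h (snd x))"

definition d1 :: "real \<Rightarrow> st \<Rightarrow> st \<Rightarrow> real" where
  "d1 h x y = norm1 h (psub x y)"

definition bounded1s :: "real \<Rightarrow> (real \<Rightarrow> real) set \<Rightarrow> bool" where
  "bounded1s h B \<longleftrightarrow> (\<exists>M. \<forall>f\<in>B. norm1s h f \<le> M)"

definition bounded1 :: "real \<Rightarrow> st set \<Rightarrow> bool" where
  "bounded1 h B \<longleftrightarrow> (\<exists>M. \<forall>x\<in>B. norm1 h x \<le> M)"

definition Uset :: "real \<Rightarrow> real \<Rightarrow> st set" where
  "Uset h Rm = {x. C1s h (fst x) \<and> C1s h (snd x) \<and> (\<forall>s\<in>{-h..0}. snd x s > Rm)}"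

definition Uplus :: "real \<Rightarrow> st set" where
  "Uplus h = {x. C1s h (fst x) \<and> C1s h (snd x) \<and> (\<forall>s\<in>{-h..0}. fst x s \<ge> 0 \<and> snd x s \<ge> 0)}"

definition Fmap :: "(real \<Rightarrow> real) \<Rightarrow> (st \<Rightarrow> real) \<Rightarrow> real \<Rightarrow> st \<Rightarrow> real \<times> real" where
  "Fmap q j \<mu> x = (q (snd x 0) * fst x 0, j x - \<mu> * snd x 0)"

definition Xplus :: "real \<Rightarrow> (real \<Rightarrow> real) \<Rightarrow> (st \<Rightarrow> real) \<Rightarrow> real \<Rightarrow> st set" where
  "Xplus h q j \<mu> = {x \<in> Uplus h. (der h (fst x) 0, der h (snd x) 0) = Fmap q j \<mu> x}"

definition seg :: "(real \<Rightarrow> real) \<Rightarrow> real \<Rightarrow> real \<Rightarrow> real" where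
  "seg x t = (\<lambda>s. x (t + s))"

definition C1_from :: "real \<Rightarrow> (real \<Rightarrow> real) \<Rightarrow> bool" where
  "C1_from h f \<longleftrightarrow> (\<exists>f'. (\<forall>t\<ge>-h. (f has_real_derivative f' t) (at t within {-h..}))
                      \<and> continuous_on {-h..} f')"

definition is_sol :: "real \<Rightarrow> real \<Rightarrow> (real \<Rightarrow> real) \<Rightarrow> (st \<Rightarrow> real) \<Rightarrow> real \<Rightarrow> st
    \<Rightarrow> (real \<Rightarrow> real) \<Rightarrow> (real \<Rightarrow> real) \<Rightarrow> bool" where
  "is_sol h Rm q j \<mu> x w v \<longleftrightarrow>
     C1_from h w \<and> C1_from h v \<and> (\<forall>t\<ge>-h. v t > Rm) \<and>
     (\<forall>s\<in>{-h..0}. w s = fst x s \<and> v s = snd x s) \<and>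
     (\<forall>t\<ge>0. (w has_real_derivative q (v t) * w t) (at t within {-h..}) \<and>
             (v has_real_derivative j (seg w t, seg v t) - \<mu> * v t) (at t within {-h..}))"

definition Sflow :: "(st \<Rightarrow> st) \<Rightarrow> real \<Rightarrow> st \<Rightarrow> st" where
  "Sflow sol t x = (seg (fst (sol x)) t, seg (snd (sol x)) t)"

definition setdist1 :: "real \<Rightarrow> st \<Rightarrow> st set \<Rightarrow> real" where
  "setdist1 h x B = (INF b\<in>B. d1 h x b)"

definition compact1 :: "real \<Rightarrow> st set \<Rightarrow> bool" where
  "compact1 h B \<longleftrightarrow> (\<forall>f::nat \<Rightarrow> st. (\<forall>n. f n \<in> B) \<longrightarrow>
       (\<exists>l\<in>B. \<exists>r. strict_mono r \<and> (\<lambda>n. d1 h (f (r n)) l) \<longlonglongrightarrow> 0))"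

definition unif_persistent :: "st set \<Rightarrow> (real \<Rightarrow> st \<Rightarrow> st) \<Rightarrow> (st \<Rightarrow> real) \<Rightarrow> bool" where
  "unif_persistent X S \<rho> \<longleftrightarrow> (\<exists>\<epsilon>>0. \<forall>y\<in>X. \<rho> y > 0 \<longrightarrow>
       Liminf at_top (\<lambda>t. ereal (\<rho> (S t y))) > ereal \<epsilon>)"

definition point_dissipative :: "real \<Rightarrow> st set \<Rightarrow> (real \<Rightarrow> st \<Rightarrow> st) \<Rightarrow> bool" where
  "point_dissipative h X S \<longleftrightarrow> (\<exists>B. B \<subseteq> X \<and> bounded1 h B \<and>
       (\<forall>x\<in>X. ((\<lambda>t. setdist1 h (S t x) B) \<longlongrightarrow> 0) at_top))"

definition rho1 :: "st \<Rightarrow> real" where "rho1 x = fst x 0"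
definition rhom :: "st \<Rightarrow> real" where "rhom x = min (fst x 0) (snd x 0)"

end

theory Submission
  imports Defs "HOL-Complex_Analysis.Great_Picard"
begin

lemma der_eq:
  assumes "h > 0" "s \<in> {-h..0}" "(f has_real_derivative d) (at s within {-h..0})"
  shows "der h f s = d"
proof -
  have u: "d' = d" if "(f has_real_derivative d') (at s within {-h..0})" for d'
  proof -
    have "vector_derivative f (at s within cbox (-h) 0) = d'"
      using that assms by (intro vector_derivative_within_cbox) (auto simp: has_real_derivative_iff_has_vector_derivative)
    moreover have "vector_derivative f (at s within cbox (-h) 0) = d"
      using assms by (intro vector_derivative_within_cbox) (auto simp: has_real_derivative_iff_has_vector_derivative)
    ultimately show ?thesis by simp
  qed
  show ?thesis unfolding der_def using assms(3) u by (rule the_equality)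
qed

lemma C1s_der:
  assumes "h > 0" "C1s h f"
  shows "\<forall>s\<in>{-h..0}. (f has_real_derivative der h f s) (at s within {-h..0})"
    and "continuous_on {-h..0} (der h f)"
proof -
  obtain f' where f': "\<forall>s\<in>{-h..0}. (f has_real_derivative f' s) (at s within {-h..0})"
    "continuous_on {-h..0} f'" using assms unfolding C1s_def by blast
  have e: "\<forall>s\<in>{-h..0}. der h f s = f' s" using f' der_eq[OF assms(1)] by blast
  show "\<forall>s\<in>{-h..0}. (f has_real_derivative der h f s) (at s within {-h..0})" using f' e by simp
  show "continuous_on {-h..0} (der h f)" using continuous_on_cong[of "{-h..0}" "{-h..0}" "der h f" f'] f'(2) e by simp
qed

lemma C1s_cont:
  assumes "h > 0" "C1s h f" shows "continuous_on {-h..0} f"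
  unfolding continuous_on_eq_continuous_within
  using C1s_der(1)[OF assms] by (auto intro: DERIV_continuous)

lemma norm0s_le:
  assumes "h \<ge> 0" "\<forall>s\<in>{-h..0}. \<bar>f s\<bar> \<le> c"
  shows "norm0s h f \<le> c"
  unfolding norm0s_def using assms by (intro cSUP_least) auto

lemma norm0s_ge:
  assumes "\<forall>s\<in>{-h..0}. \<bar>f s\<bar> \<le> c" "s \<in> {-h..0}"
  shows "\<bar>f s\<bar> \<le> norm0s h f"
  unfolding norm0s_def using assms by (intro cSUP_upper) (auto simp: bdd_above_def)

lemma norm0s_nonneg:
  assumes "h \<ge> 0" "\<forall>s\<in>{-h..0}. \<bar>f s\<bar> \<le> c"
  shows "0 \<le> norm0s h f"
proof -
  have "(0::real) \<in> {-h..0}" using assms(1) by simp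
  from norm0s_ge[OF assms(2) this] show ?thesis by linarith
qed

lemma cont_bdd:
  fixes f :: "real \<Rightarrow> real"
  assumes "continuous_on {-h..0} f"
  shows "\<exists>c. \<forall>s\<in>{-h..0}. \<bar>f s\<bar> \<le> c"
proof -
  have "compact (f ` {-h..0})" using compact_continuous_image[OF assms] by simp
  then have "bounded (f ` {-h..0})" by (rule compact_imp_bounded)
  then obtain c where "\<forall>y\<in>f ` {-h..0}. norm y \<le> c" unfolding bounded_iff by blast
  then show ?thesis by (metis image_eqI real_norm_def)
qed

lemma last_time:
  fixes f :: "real \<Rightarrow> real"
  assumes "a \<le> b" "continuous_on {a..b} f" "f a \<le> L" "L < f b"
  shows "\<exists>c. a \<le> c \<and> c < b \<and> f c = L \<and> (\<forall>r. c < r \<and> r \<le> b \<longrightarrow> L < f r)"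
proof -
  define T where "T = {a..b} \<inter> f -` {..L}"
  have cl: "closed T" unfolding T_def
    by (rule continuous_closed_preimage[OF assms(2)]) auto
  have aT: "a \<in> T" using assms unfolding T_def by auto
  have bd: "bdd_above T" unfolding T_def by (auto simp: bdd_above_def)
  define c where "c = Sup T"
  have cT: "c \<in> T" unfolding c_def using closed_contains_Sup[OF _ bd cl] aT by blast
  have ac: "a \<le> c" unfolding c_def using cSup_upper[OF aT bd] .
  have cb: "c \<le> b" using cT unfolding T_def by auto
  have fc: "f c \<le> L" using cT unfolding T_def by auto
  have cb2: "c < b" using cb fc assms(4) by (cases "c = b") auto
  have after: "\<forall>r. c < r \<and> r \<le> b \<longrightarrow> L < f r"
  proof (intro allI impI)
    fix r assume r: "c < r \<and> r \<le> b"
    show "L < f r"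
    proof (rule ccontr)
      assume "\<not> L < f r"
      then have "r \<in> T" using r ac unfolding T_def by auto
      then have "r \<le> c" unfolding c_def using cSup_upper[OF _ bd] by blast
      then show False using r by simp
    qed
  qed
  have "continuous_on {c..b} f" by (rule continuous_on_subset[OF assms(2)]) (use ac in auto)
  then obtain r where r: "c \<le> r" "r \<le> b" "f r = L"
    using IVT'[of f c L b] fc assms(4) cb2 by auto
  have "r = c"
  proof (rule ccontr)
    assume "r \<noteq> c" then have "c < r" using r by simp
    then show False using after r by auto
  qed
  then show ?thesis using ac cb2 r after by blast
qed

lemma lin_lower:
  fixes f f' :: "real \<Rightarrow> real"
  assumes m: "m > 0" and ab: "a \<le> b" and cont: "continuous_on {a..b} f"
    and der: "\<And>t. a < t \<Longrightarrow> t < b \<Longrightarrow> (f has_real_derivative f' t) (at t)"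
    and ineq: "\<And>t. a < t \<Longrightarrow> t < b \<Longrightarrow> f' t \<ge> c - m * f t"
  shows "f b \<ge> c/m + (f a - c/m) * exp (-m*(b-a))"
proof -
  define g where "g t = (f t - c/m) * exp (m*t)" for t
  have "g a \<le> g b"
  proof (rule DERIV_nonneg_imp_increasing_open[OF ab])
    fix t assume t: "a < t" "t < b"
    have "(g has_real_derivative (f' t * exp (m*t) + (f t - c/m) * (exp (m*t) * m))) (at t)"
      unfolding g_def using der[OF t]
      by (auto intro!: derivative_eq_intros)
    moreover have "f' t * exp (m*t) + (f t - c/m) * (exp (m*t) * m) = (f' t + m * f t - c) * exp (m*t)"
      using m by (simp add: field_simps)
    moreover have "(f' t + m * f t - c) * exp (m*t) \<ge> 0" using ineq[OF t] by simp
    ultimately show "\<exists>y. (g has_real_derivative y) (at t) \<and> 0 \<le> y" by auto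
  next
    show "continuous_on {a..b} g" unfolding g_def using cont by (auto intro!: continuous_intros)
  qed
  then have "(f a - c/m) * exp (m*a) \<le> (f b - c/m) * exp (m*b)" unfolding g_def .
  then have "(f a - c/m) * exp (m*a) / exp (m*b) \<le> f b - c/m"
    by (simp add: divide_le_eq)
  moreover have "exp (m*a) / exp (m*b) = exp (-m*(b-a))" by (simp add: exp_diff[symmetric] algebra_simps)
  moreover have "(f a - c/m) * exp (m*a) / exp (m*b) = (f a - c/m) * (exp (m*a) / exp (m*b))" by simp
  ultimately show ?thesis by (simp add: algebra_simps)
qed

lemma lin_upper:
  fixes f f' :: "real \<Rightarrow> real"
  assumes m: "m > 0" and ab: "a \<le> b" and cont: "continuous_on {a..b} f"
    and der: "\<And>t. a < t \<Longrightarrow> t < b \<Longrightarrow> (f has_real_derivative f' t) (at t)"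
    and ineq: "\<And>t. a < t \<Longrightarrow> t < b \<Longrightarrow> f' t \<le> c - m * f t"
  shows "f b \<le> c/m + (f a - c/m) * exp (-m*(b-a))"
proof -
  have "(- f b) \<ge> (-c)/m + ((- f a) - (-c)/m) * exp (-m*(b-a))"
  proof (rule lin_lower[where f="\<lambda>t. - f t" and f'="\<lambda>t. - f' t", OF m ab])
    show "continuous_on {a..b} (\<lambda>t. - f t)" using cont by (auto intro: continuous_intros)
    show "((\<lambda>t. - f t) has_real_derivative - f' t) (at t)" if "a < t" "t < b" for t
      using der[OF that] by (auto intro: derivative_intros)
    show "- f' t \<ge> - c - m * (- f t)" if "a < t" "t < b" for t using ineq[OF that] by simp
  qed
  then show ?thesis by (simp add: algebra_simps)
qed

lemma seg_deriv:
  fixes f f' :: "real \<Rightarrow> real"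
  assumes "\<forall>t\<ge>-h. (f has_real_derivative f' t) (at t within {-h..})" "t \<ge> 0" "s \<in> {-h..0}"
  shows "(seg f t has_real_derivative f' (t+s)) (at s within {-h..0})"
proof -
  have img: "(\<lambda>s. t + s) ` {-h..0} \<subseteq> {-h..}" using assms(2) by auto
  have "(f has_real_derivative f' (t+s)) (at (t+s) within {-h..})" using assms by auto
  then have d1: "(f has_real_derivative f' (t+s)) (at ((\<lambda>s. t + s) s) within ((\<lambda>s. t + s) ` {-h..0}))"
    using has_field_derivative_subset[OF _ img] by simp
  have d2: "((\<lambda>s. t + s) has_real_derivative 1) (at s within {-h..0})"
    by (auto intro!: derivative_eq_intros)
  have "((f \<circ> (\<lambda>s. t + s)) has_real_derivative f' (t+s) * 1) (at s within {-h..0})"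
    by (rule DERIV_image_chain[OF d1 d2])
  then show ?thesis unfolding seg_def o_def by simp
qed

lemma seg_C1s:
  fixes f f' :: "real \<Rightarrow> real"
  assumes h: "h > 0" and d: "\<forall>t\<ge>-h. (f has_real_derivative f' t) (at t within {-h..})"
    and c: "continuous_on {-h..} f'" and t: "t \<ge> 0"
  shows "C1s h (seg f t)" "\<forall>s\<in>{-h..0}. der h (seg f t) s = f' (t+s)"
proof -
  have D: "\<forall>s\<in>{-h..0}. (seg f t has_real_derivative f' (t+s)) (at s within {-h..0})"
    using seg_deriv[OF d t] by blast
  have "continuous_on {-h..0} (\<lambda>s. f' (t+s))"
    by (rule continuous_on_compose2[OF c]) (use t in \<open>auto intro!: continuous_intros\<close>)
  then show "C1s h (seg f t)" unfolding C1s_def using D by (intro exI[of _ "\<lambda>s. f' (t+s)"]) auto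
  show "\<forall>s\<in>{-h..0}. der h (seg f t) s = f' (t+s)" using D der_eq[OF h] by blast
qed

lemma within_to_at:
  fixes f :: "real \<Rightarrow> real"
  assumes "(f has_real_derivative d) (at t within {a..})" "a < t"
  shows "(f has_real_derivative d) (at t)"
proof -
  have "{a<..} \<subseteq> {a..}" by auto
  from has_field_derivative_subset[OF assms(1) this]
  have "(f has_real_derivative d) (at t within {a<..})" .
  then show ?thesis using at_within_open[of t "{a<..}"] assms(2) by auto
qed

locale ctx =
  fixes h Rm \<mu> :: real and q :: "real \<Rightarrow> real" and j :: "st \<Rightarrow> real" and sol :: "st \<Rightarrow> st"
  assumes h: "h > 0" and Rm: "Rm < 0" and mu: "\<mu> > 0"
    and j_fun: "\<forall>x\<in>Uset h Rm. \<forall>y\<in>Uset h Rm. (\<forall>s\<in>{-h..0}. fst x s = fst y s \<and> snd x s = snd y s) \<longrightarrow> j x = j y"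
    and j_C1: "\<exists>Dj :: st \<Rightarrow> st \<Rightarrow> real.
        (\<forall>x\<in>Uset h Rm. \<forall>a b. \<forall>c. Cont h a \<and> Cont h b \<longrightarrow>
            Dj x (padd a b) = Dj x a + Dj x b \<and> Dj x (pscale c a) = c * Dj x a)
      \<and> (\<forall>x\<in>Uset h Rm. \<forall>\<epsilon>>0. \<exists>\<delta>>0. \<forall>y. C1s h (fst y) \<and> C1s h (snd y) \<and> norm1 h y < \<delta>
            \<and> padd x y \<in> Uset h Rm \<longrightarrow> \<bar>j (padd x y) - j x - Dj x y\<bar> \<le> \<epsilon> * norm1 h y)
      \<and> (\<forall>x\<in>Uset h Rm. \<forall>\<epsilon>>0. \<exists>\<delta>>0. \<forall>x'\<in>Uset h Rm. d1 h x' x < \<delta> \<longrightarrow>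
            (\<forall>y. C1s h (fst y) \<and> C1s h (snd y) \<longrightarrow> \<bar>Dj x' y - Dj x y\<bar> \<le> \<epsilon> * norm1 h y))
      \<and> (\<forall>x\<in>Uset h Rm. \<forall>y. Cont h y \<longrightarrow> (\<forall>\<epsilon>>0. \<exists>\<delta>>0. \<forall>x'\<in>Uset h Rm. \<forall>y'. Cont h y' \<and>
            d1 h x' x < \<delta> \<and> norm0 h (psub y' y) < \<delta> \<longrightarrow> \<bar>Dj x' y' - Dj x y\<bar> < \<epsilon>))"
    and j_lip: "\<forall>B. B \<subseteq> Uplus h \<and> bounded1 h B \<longrightarrow>
        (\<exists>L\<ge>0. \<forall>x\<in>B. \<forall>y\<in>B. \<bar>j x - j y\<bar> \<le> L * norm0 h (psub x y))"
    and j_nonneg: "\<forall>x\<in>Uplus h. j x \<ge> 0"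
    and j_bdd: "\<forall>B1 B2. B1 \<times> B2 \<subseteq> Uplus h \<and> bounded1s h B1 \<longrightarrow> bounded (j ` (B1 \<times> B2))"
    and q_bdd: "bounded (q ` {Rm<..})"
    and q_C1: "q C1_differentiable_on {Rm<..}"
    and j_small: "\<forall>\<epsilon>>0. \<exists>\<delta>>0. \<forall>x\<in>Uplus h. norm0s h (fst x) \<le> \<delta> \<longrightarrow> j x \<le> \<epsilon>"
    and q0: "q 0 > 0"
    and q_neg: "\<exists>\<delta>>0. \<exists>zs\<ge>0. \<forall>z\<ge>zs. q z \<le> -\<delta>"
    and j_large: "\<forall>K>0. \<exists>L. \<forall>x\<in>Uplus h. (\<forall>s\<in>{-h..0}. fst x s \<ge> L) \<longrightarrow> j x \<ge> K"
    and sol_ex: "\<forall>x\<in>Xplus h q j \<mu>. is_sol h Rm q j \<mu> x (fst (sol x)) (snd (sol x))"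
    and sol_uniq: "\<forall>x\<in>Xplus h q j \<mu>. \<forall>w v. is_sol h Rm q j \<mu> x w v \<longrightarrow>
        (\<forall>t\<ge>-h. w t = fst (sol x) t \<and> v t = snd (sol x) t)"
    and sol_cont: "\<forall>t0\<ge>0. \<forall>x0\<in>Xplus h q j \<mu>. \<forall>\<epsilon>>0. \<exists>\<delta>>0. \<forall>t\<ge>0. \<forall>x\<in>Xplus h q j \<mu>.
        \<bar>t - t0\<bar> < \<delta> \<and> d1 h x x0 < \<delta> \<longrightarrow> d1 h (Sflow sol t x) (Sflow sol t0 x0) < \<epsilon>"
begin

abbreviation X where "X \<equiv> Xplus h q j \<mu>"
abbreviation W where "W x \<equiv> fst (sol x)"
abbreviation V where "V x \<equiv> snd (sol x)"

definition dW where "dW x = (SOME w'. (\<forall>t\<ge>-h. (W x has_real_derivative w' t) (at t within {-h..})) \<and> continuous_on {-h..} w')"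
definition dV where "dV x = (SOME w'. (\<forall>t\<ge>-h. (V x has_real_derivative w' t) (at t within {-h..})) \<and> continuous_on {-h..} w')"

lemma isol: "x \<in> X \<Longrightarrow> is_sol h Rm q j \<mu> x (W x) (V x)" using sol_ex by blast

lemma dW: assumes "x \<in> X"
  shows "\<forall>t\<ge>-h. (W x has_real_derivative dW x t) (at t within {-h..})" "continuous_on {-h..} (dW x)"
proof -
  have "\<exists>w'. (\<forall>t\<ge>-h. (W x has_real_derivative w' t) (at t within {-h..})) \<and> continuous_on {-h..} w'"
    using isol[OF assms] unfolding is_sol_def C1_from_def by blast
  from someI_ex[OF this] show "\<forall>t\<ge>-h. (W x has_real_derivative dW x t) (at t within {-h..})" "continuous_on {-h..} (dW x)"
    unfolding dW_def by blast+
qed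

lemma dV: assumes "x \<in> X"
  shows "\<forall>t\<ge>-h. (V x has_real_derivative dV x t) (at t within {-h..})" "continuous_on {-h..} (dV x)"
proof -
  have "\<exists>w'. (\<forall>t\<ge>-h. (V x has_real_derivative w' t) (at t within {-h..})) \<and> continuous_on {-h..} w'"
    using isol[OF assms] unfolding is_sol_def C1_from_def by blast
  from someI_ex[OF this] show "\<forall>t\<ge>-h. (V x has_real_derivative dV x t) (at t within {-h..})" "continuous_on {-h..} (dV x)"
    unfolding dV_def by blast+
qed

lemma W_deriv: assumes "x \<in> X" "t \<ge> 0"
  shows "(W x has_real_derivative q (V x t) * W x t) (at t)"
  using isol[OF assms(1)] assms(2) h unfolding is_sol_def by (auto intro: within_to_at)

lemma V_deriv: assumes "x \<in> X" "t \<ge> 0"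
  shows "(V x has_real_derivative j (seg (W x) t, seg (V x) t) - \<mu> * V x t) (at t)"
  using isol[OF assms(1)] assms(2) h unfolding is_sol_def by (auto intro: within_to_at)

lemma dW_eq: assumes "x \<in> X" "t \<ge> 0" shows "dW x t = q (V x t) * W x t"
proof -
  have "(W x has_real_derivative dW x t) (at t)"
    using within_to_at[of "W x" "dW x t" t "-h"] dW(1)[OF assms(1)] assms(2) h by auto
  then show ?thesis using W_deriv[OF assms] DERIV_unique by blast
qed

lemma dV_eq: assumes "x \<in> X" "t \<ge> 0" shows "dV x t = j (seg (W x) t, seg (V x) t) - \<mu> * V x t"
proof -
  have "(V x has_real_derivative dV x t) (at t)"
    using within_to_at[of "V x" "dV x t" t "-h"] dV(1)[OF assms(1)] assms(2) h by auto
  then show ?thesis using V_deriv[OF assms] DERIV_unique by blast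
qed

lemma W_cont: assumes "x \<in> X" shows "continuous_on {-h..} (W x)"
  unfolding continuous_on_eq_continuous_within using dW(1)[OF assms]
  by (auto intro: DERIV_continuous)

lemma V_cont: assumes "x \<in> X" shows "continuous_on {-h..} (V x)"
  unfolding continuous_on_eq_continuous_within using dV(1)[OF assms]
  by (auto intro: DERIV_continuous)

lemma V_gt: assumes "x \<in> X" "t \<ge> -h" shows "V x t > Rm"
  using isol[OF assms(1)] assms(2) unfolding is_sol_def by auto

lemma init: assumes "x \<in> X" "s \<in> {-h..0}" shows "W x s = fst x s" "V x s = snd x s"
  using isol[OF assms(1)] assms(2) unfolding is_sol_def by auto

lemma X_Uplus: "x \<in> X \<Longrightarrow> x \<in> Uplus h" unfolding Xplus_def by auto

lemma init_nonneg: assumes "x \<in> X" "s \<in> {-h..0}" shows "W x s \<ge> 0" "V x s \<ge> 0"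
  using init[OF assms] X_Uplus[OF assms(1)] assms(2) unfolding Uplus_def by auto

lemma Sflow_eq: "Sflow sol t x = (seg (W x) t, seg (V x) t)" unfolding Sflow_def by simp

lemma Sflow_C1: assumes "x \<in> X" "t \<ge> 0"
  shows "C1s h (seg (W x) t)" "\<forall>s\<in>{-h..0}. der h (seg (W x) t) s = dW x (t+s)"
    "C1s h (seg (V x) t)" "\<forall>s\<in>{-h..0}. der h (seg (V x) t) s = dV x (t+s)"
  using seg_C1s[OF h dW(1)[OF assms(1)] dW(2)[OF assms(1)] assms(2)]
    seg_C1s[OF h dV(1)[OF assms(1)] dV(2)[OF assms(1)] assms(2)] by auto

lemma q_cont: "continuous_on {Rm<..} q"
  using q_C1 by (rule C1_differentiable_imp_continuous_on)

lemma Q_ex: "\<exists>Q>0. \<forall>z>Rm. \<bar>q z\<bar> \<le> Q"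
proof -
  obtain B where "\<forall>y\<in>q ` {Rm<..}. norm y \<le> B" using q_bdd unfolding bounded_iff by blast
  then have "\<forall>z>Rm. \<bar>q z\<bar> \<le> max B 1" by force
  then show ?thesis by (intro exI[of _ "max B 1"]) auto
qed

definition Qb where "Qb = (SOME Q. Q > 0 \<and> (\<forall>z>Rm. \<bar>q z\<bar> \<le> Q))"
lemma Qb: "Qb > 0" "\<And>z. z > Rm \<Longrightarrow> \<bar>q z\<bar> \<le> Qb"
  using someI_ex[OF Q_ex] unfolding Qb_def by auto

lemma qV_cont: assumes "x \<in> X" shows "continuous_on {-h..} (\<lambda>s. q (V x s))"
  by (rule continuous_on_compose2[OF q_cont V_cont[OF assms]]) (use V_gt[OF assms] in auto)

definition Gi where "Gi x a b = integral {a..b} (\<lambda>s. q (V x s))"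

lemma W_formula: assumes x: "x \<in> X" and ab: "0 \<le> a" "a \<le> b"
  shows "W x b = W x a * exp (Gi x a b)"
proof -
  have cq: "continuous_on {a..b} (\<lambda>s. q (V x s))"
    by (rule continuous_on_subset[OF qV_cont[OF x]]) (use ab h in auto)
  have ci: "continuous_on {a..b} (\<lambda>t. integral {a..t} (\<lambda>s. q (V x s)))"
    by (rule indefinite_integral_continuous_1[OF integrable_continuous_interval[OF cq]])
  have cw: "continuous_on {a..b} (W x)"
    by (rule continuous_on_subset[OF W_cont[OF x]]) (use ab h in auto)
  define g where "g t = W x t * exp (- integral {a..t} (\<lambda>s. q (V x s)))" for t
  have gc: "continuous_on {a..b} g" unfolding g_def using ci cw by (auto intro!: continuous_intros)
  have gd: "(g has_real_derivative 0) (at t)" if t: "a < t" "t < b" for t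
  proof -
    have "((\<lambda>t. integral {a..t} (\<lambda>s. q (V x s))) has_vector_derivative q (V x t)) (at t within {a..b})"
      using integral_has_vector_derivative[OF cq] t by auto
    then have "((\<lambda>t. integral {a..t} (\<lambda>s. q (V x s))) has_real_derivative q (V x t)) (at t)"
      using at_within_interior[of t "{a..b}"] t by (simp add: has_real_derivative_iff_has_vector_derivative)
    moreover have "(W x has_real_derivative q (V x t) * W x t) (at t)" using W_deriv[OF x] t ab by auto
    ultimately have "(g has_real_derivative (q (V x t) * W x t) * exp (- integral {a..t} (\<lambda>s. q (V x s)))
          + W x t * (exp (- integral {a..t} (\<lambda>s. q (V x s))) * (- q (V x t)))) (at t)"
      unfolding g_def by (auto intro!: derivative_eq_intros)
    then show ?thesis by (simp add: algebra_simps)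
  qed
  have "g a \<le> g b" by (rule DERIV_nonneg_imp_increasing_open[OF ab(2) _ gc]) (use gd in auto)
  moreover have "- g a \<le> - g b"
  proof (rule DERIV_nonneg_imp_increasing_open[OF ab(2)])
    fix t assume "a < t" "t < b"
    from DERIV_minus[OF gd[OF this]] show "\<exists>y. ((\<lambda>t. - g t) has_real_derivative y) (at t) \<and> 0 \<le> y" by auto
  next
    show "continuous_on {a..b} (\<lambda>t. - g t)" using gc by (auto intro: continuous_intros)
  qed
  ultimately have "g b = g a" by simp
  then have "W x b * exp (- Gi x a b) = W x a" unfolding g_def Gi_def by simp
  then have "W x b * exp (- Gi x a b) * exp (Gi x a b) = W x a * exp (Gi x a b)" by simp
  then show ?thesis by (simp add: exp_minus field_simps)
qed

end

context ctx begin

lemma Gi_lower: assumes x: "x \<in> X" and ab: "0 \<le> a" "a \<le> b" and q: "\<forall>s\<in>{a..b}. q (V x s) \<ge> \<alpha>"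
  shows "Gi x a b \<ge> \<alpha> * (b - a)"
proof -
  have cq: "continuous_on {a..b} (\<lambda>s. q (V x s))"
    by (rule continuous_on_subset[OF qV_cont[OF x]]) (use ab h in auto)
  have "integral {a..b} (\<lambda>s. \<alpha>) \<le> integral {a..b} (\<lambda>s. q (V x s))"
    by (rule integral_le) (use q integrable_continuous_interval[OF cq] in auto)
  then show ?thesis using ab unfolding Gi_def by (simp add: algebra_simps)
qed

lemma Gi_upper: assumes x: "x \<in> X" and ab: "0 \<le> a" "a \<le> b" and q: "\<forall>s\<in>{a..b}. q (V x s) \<le> \<beta>"
  shows "Gi x a b \<le> \<beta> * (b - a)"
proof -
  have cq: "continuous_on {a..b} (\<lambda>s. q (V x s))"
    by (rule continuous_on_subset[OF qV_cont[OF x]]) (use ab h in auto)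
  have "integral {a..b} (\<lambda>s. q (V x s)) \<le> integral {a..b} (\<lambda>s. \<beta>)"
    by (rule integral_le) (use q integrable_continuous_interval[OF cq] in auto)
  then show ?thesis using ab unfolding Gi_def by (simp add: algebra_simps)
qed

lemma W_nonneg: assumes x: "x \<in> X" and t: "t \<ge> -h" shows "W x t \<ge> 0"
proof (cases "t \<le> 0")
  case True then show ?thesis using init_nonneg[OF x] t by auto
next
  case False
  have "W x t = W x 0 * exp (Gi x 0 t)" using W_formula[OF x, of 0 t] False by linarith
  moreover have "W x 0 \<ge> 0" using init_nonneg[OF x, of 0] h by auto
  ultimately show ?thesis by simp
qed

lemma W_pos: assumes x: "x \<in> X" and p: "fst x 0 > 0" and t: "t \<ge> 0" shows "W x t > 0"
proof -
  have "W x t = W x 0 * exp (Gi x 0 t)" using W_formula[OF x, of 0 t] t by linarith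
  moreover have "W x 0 > 0" using init[OF x, of 0] h p by auto
  ultimately show ?thesis by simp
qed

lemma W_lower: assumes x: "x \<in> X" and ab: "0 \<le> a" "a \<le> b" and q: "\<forall>s\<in>{a..b}. q (V x s) \<ge> \<alpha>"
  shows "W x b \<ge> W x a * exp (\<alpha> * (b - a))"
proof -
  have "W x b = W x a * exp (Gi x a b)" using W_formula[OF x ab] .
  moreover have "exp (\<alpha> * (b - a)) \<le> exp (Gi x a b)" using Gi_lower[OF assms] by simp
  moreover have "W x a \<ge> 0" using W_nonneg[OF x] ab h by auto
  ultimately show ?thesis by (simp add: mult_left_mono)
qed

lemma W_upper: assumes x: "x \<in> X" and ab: "0 \<le> a" "a \<le> b" and q: "\<forall>s\<in>{a..b}. q (V x s) \<le> \<beta>"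
  shows "W x b \<le> W x a * exp (\<beta> * (b - a))"
proof -
  have "W x b = W x a * exp (Gi x a b)" using W_formula[OF x ab] .
  moreover have "exp (Gi x a b) \<le> exp (\<beta> * (b - a))" using Gi_upper[OF assms] by simp
  moreover have "W x a \<ge> 0" using W_nonneg[OF x] ab h by auto
  ultimately show ?thesis by (simp add: mult_left_mono)
qed

lemma qV_bound: assumes x: "x \<in> X" "s \<ge> -h" shows "\<bar>q (V x s)\<bar> \<le> Qb"
  using Qb(2)[OF V_gt[OF assms]] .

lemma W_Q: assumes x: "x \<in> X" and ab: "0 \<le> a" "a \<le> b"
  shows "W x b \<ge> W x a * exp (- Qb * (b - a))" "W x b \<le> W x a * exp (Qb * (b - a))"
proof -
  have "\<forall>s\<in>{a..b}. q (V x s) \<ge> - Qb"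
  proof
    fix s assume "s \<in> {a..b}" then have "s \<ge> -h" using ab h by auto
    from qV_bound[OF x this] show "q (V x s) \<ge> - Qb" by (simp add: abs_le_iff)
  qed
  from W_lower[OF x ab this] show "W x b \<ge> W x a * exp (- Qb * (b - a))" by simp
  have "\<forall>s\<in>{a..b}. q (V x s) \<le> Qb"
  proof
    fix s assume "s \<in> {a..b}" then have "s \<ge> -h" using ab h by auto
    from qV_bound[OF x this] show "q (V x s) \<le> Qb" by (simp add: abs_le_iff)
  qed
  from W_upper[OF x ab this] show "W x b \<le> W x a * exp (Qb * (b - a))" by simp
qed

end

lemma C1s_const: "C1s h (\<lambda>s. c)"
  unfolding C1s_def by (intro exI[of _ "\<lambda>s. 0"]) (auto intro!: derivative_eq_intros)

lemma C1s_add_const: assumes "h > 0" "C1s h f" shows "C1s h (\<lambda>s. f s + c)"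
proof -
  obtain f' where f': "\<forall>s\<in>{-h..0}. (f has_real_derivative f' s) (at s within {-h..0})" "continuous_on {-h..0} f'"
    using assms(2) unfolding C1s_def by blast
  show ?thesis unfolding C1s_def using f' by (intro exI[of _ f']) (auto intro!: derivative_eq_intros)
qed

lemma C1s_diff: assumes "h > 0" "C1s h f" "C1s h g" shows "C1s h (\<lambda>s. f s - g s)"
proof -
  obtain f' where f': "\<forall>s\<in>{-h..0}. (f has_real_derivative f' s) (at s within {-h..0})" "continuous_on {-h..0} f'"
    using assms(2) unfolding C1s_def by blast
  obtain g' where g': "\<forall>s\<in>{-h..0}. (g has_real_derivative g' s) (at s within {-h..0})" "continuous_on {-h..0} g'"
    using assms(3) unfolding C1s_def by blast
  show ?thesis unfolding C1s_def using f' g'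
    by (intro exI[of _ "\<lambda>s. f' s - g' s"]) (auto intro!: derivative_eq_intros continuous_intros)
qed

lemma der_const: assumes "h > 0" "s \<in> {-h..0}" shows "der h (\<lambda>s. c) s = 0"
  by (rule der_eq[OF assms]) (auto intro!: derivative_eq_intros)

lemma der_add_const: assumes "h > 0" "C1s h f" "s \<in> {-h..0}" shows "der h (\<lambda>s. f s + c) s = der h f s"
  using C1s_der(1)[OF assms(1,2)] assms(3)
  by (intro der_eq[OF assms(1,3)]) (auto intro!: derivative_eq_intros)

lemma der_diff: assumes "h > 0" "C1s h f" "C1s h g" "s \<in> {-h..0}"
  shows "der h (\<lambda>s. f s - g s) s = der h f s - der h g s"
  using C1s_der(1)[OF assms(1,2)] C1s_der(1)[OF assms(1,3)] assms(4)
  by (intro der_eq[OF assms(1,4)]) (auto intro!: derivative_eq_intros)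

lemma norm0s_cong: "(\<And>s. s \<in> {-h..0} \<Longrightarrow> f s = g s) \<Longrightarrow> norm0s h f = norm0s h g"
  unfolding norm0s_def by (rule SUP_cong) auto

lemma norm0s_const: assumes "h \<ge> 0" shows "norm0s h (\<lambda>s. c) = \<bar>c\<bar>"
  unfolding norm0s_def using assms by simp

lemma C1s_bdd: assumes "h > 0" "C1s h f" shows "\<exists>c. \<forall>s\<in>{-h..0}. \<bar>f s\<bar> \<le> c"
  using cont_bdd[OF C1s_cont[OF assms]] .

lemma C1s_der_bdd: assumes "h > 0" "C1s h f" shows "\<exists>c. \<forall>s\<in>{-h..0}. \<bar>der h f s\<bar> \<le> c"
  using cont_bdd[OF C1s_der(2)[OF assms]] .

lemma norm0s_add_const: assumes "h > 0" "\<forall>s\<in>{-h..0}. \<bar>f s\<bar> \<le> B"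
  shows "norm0s h (\<lambda>s. f s + c) \<le> norm0s h f + \<bar>c\<bar>"
proof (rule norm0s_le)
  show "0 \<le> h" using assms by simp
  show "\<forall>s\<in>{-h..0}. \<bar>f s + c\<bar> \<le> norm0s h f + \<bar>c\<bar>"
  proof
    fix s assume s: "s \<in> {-h..0}"
    have "\<bar>f s\<bar> \<le> norm0s h f" by (rule norm0s_ge[OF assms(2) s])
    then show "\<bar>f s + c\<bar> \<le> norm0s h f + \<bar>c\<bar>" by linarith
  qed
qed

definition sh :: "real \<Rightarrow> st \<Rightarrow> st" where "sh c y = (fst y, \<lambda>s. snd y s + c)"
definition ee :: st where "ee = ((\<lambda>s. 0), (\<lambda>s. 1))"

lemma padd_sh: "padd (sh a y) (pscale t ee) = sh (a + t) y"
  unfolding padd_def pscale_def sh_def ee_def by (simp add: algebra_simps)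

lemma sh_0: "sh 0 y = y" unfolding sh_def by simp

lemma norm1_pscale_ee: assumes "h > 0" shows "norm1 h (pscale t ee) = \<bar>t\<bar>"
proof -
  have a: "norm0 h (pscale t ee) = \<bar>t\<bar>"
    unfolding norm0_def pscale_def ee_def using norm0s_const[of h] assms by simp
  have b: "norm0s h (der h (\<lambda>s. t * 0)) = 0" "norm0s h (der h (\<lambda>s. t * 1)) = 0"
    using norm0s_cong[of h "der h (\<lambda>s. t * 0)" "\<lambda>s. 0"] norm0s_cong[of h "der h (\<lambda>s. t * 1)" "\<lambda>s. 0"]
      der_const[OF assms] norm0s_const[of h 0] assms by auto
  show ?thesis unfolding norm1_def a using b unfolding norm0_def pscale_def ee_def by simp
qed

lemma norm1_sh: assumes h: "h > 0" and c: "C1s h (fst p)" "C1s h (snd p)"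
  shows "norm1 h (fst p, \<lambda>s. snd p s + c) \<le> norm1 h p + \<bar>c\<bar>"
proof -
  obtain B where B: "\<forall>s\<in>{-h..0}. \<bar>snd p s\<bar> \<le> B" using C1s_bdd[OF h c(2)] by blast
  have "norm0 h (fst p, \<lambda>s. snd p s + c) \<le> norm0 h p + \<bar>c\<bar>"
    unfolding norm0_def using norm0s_add_const[OF h B, of c] by auto
  moreover have "norm0s h (der h (\<lambda>s. snd p s + c)) = norm0s h (der h (snd p))"
    by (rule norm0s_cong) (use der_add_const[OF h c(2)] in auto)
  ultimately show ?thesis unfolding norm1_def norm0_def by simp
qed

lemma psub_sh: "psub (sh c x) y = (fst (psub x y), \<lambda>s. snd (psub x y) s + c)"
  unfolding psub_def sh_def by (simp add: algebra_simps)

lemma d1_sh: assumes h: "h > 0" and c: "C1s h (fst x)" "C1s h (snd x)" "C1s h (fst y)" "C1s h (snd y)"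
  shows "d1 h (sh c x) y \<le> d1 h x y + \<bar>c\<bar>"
proof -
  have "C1s h (fst (psub x y))" "C1s h (snd (psub x y))"
    unfolding psub_def using C1s_diff[OF h] c by auto
  from norm1_sh[OF h this, of c] show ?thesis unfolding d1_def psub_sh .
qed

lemma d1_self: assumes "h > 0" shows "d1 h x x = 0"
proof -
  have p: "psub x x = ((\<lambda>s. 0), (\<lambda>s. 0))" unfolding psub_def by simp
  have "norm0s h (der h (\<lambda>s. 0)) = 0"
    using norm0s_cong[of h "der h (\<lambda>s. 0)" "\<lambda>s. 0"] der_const[OF assms] norm0s_const[of h 0] assms by auto
  then show ?thesis unfolding d1_def p norm1_def norm0_def using norm0s_const[of h 0] assms by simp
qed

context ctx begin

lemma shift_deriv:
  assumes lin: "\<forall>x\<in>Uset h Rm. \<forall>a b. \<forall>c. Cont h a \<and> Cont h b \<longrightarrow>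
            Dj x (padd a b) = Dj x a + Dj x b \<and> Dj x (pscale c a) = c * Dj x a"
    and fr: "\<forall>x\<in>Uset h Rm. \<forall>\<epsilon>>0. \<exists>\<delta>>0. \<forall>y. C1s h (fst y) \<and> C1s h (snd y) \<and> norm1 h y < \<delta>
            \<and> padd x y \<in> Uset h Rm \<longrightarrow> \<bar>j (padd x y) - j x - Dj x y\<bar> \<le> \<epsilon> * norm1 h y"
    and y: "C1s h (fst y)" "C1s h (snd y)" and m: "m > 0" and mar: "\<forall>s\<in>{-h..0}. snd y s + \<sigma> > Rm + m"
  shows "((\<lambda>\<sigma>. j (sh \<sigma> y)) has_real_derivative Dj (sh \<sigma> y) ee) (at \<sigma>)"
proof -
  have mar2: "\<forall>s\<in>{-h..0}. snd y s + \<sigma> > Rm"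
  proof
    fix s assume "s \<in> {-h..0}" from mar this have "snd y s + \<sigma> > Rm + m" by blast
    then show "snd y s + \<sigma> > Rm" using m by linarith
  qed
  have base: "sh \<sigma> y \<in> Uset h Rm"
    using mar2 by (simp add: Uset_def sh_def y C1s_add_const[OF h y(2)])
  have contee: "Cont h ee" unfolding Cont_def ee_def by auto
  show ?thesis unfolding DERIV_def LIM_eq
  proof (intro allI impI)
    fix r :: real assume r: "r > 0"
    obtain \<delta> where \<delta>: "\<delta> > 0" and H: "\<forall>y'. C1s h (fst y') \<and> C1s h (snd y') \<and> norm1 h y' < \<delta>
            \<and> padd (sh \<sigma> y) y' \<in> Uset h Rm \<longrightarrow> \<bar>j (padd (sh \<sigma> y) y') - j (sh \<sigma> y) - Dj (sh \<sigma> y) y'\<bar> \<le> (r/2) * norm1 h y'"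
      using bspec[OF fr base, rule_format, of "r/2"] r by auto
    show "\<exists>s>0. \<forall>\<tau>. \<tau> \<noteq> 0 \<and> norm (\<tau> - 0) < s \<longrightarrow>
        norm ((j (sh (\<sigma> + \<tau>) y) - j (sh \<sigma> y)) / \<tau> - Dj (sh \<sigma> y) ee) < r"
    proof (intro exI[of _ "min \<delta> m"] conjI allI impI)
      show "min \<delta> m > 0" using \<delta> m by simp
      fix \<tau> :: real assume \<tau>: "\<tau> \<noteq> 0 \<and> norm (\<tau> - 0) < min \<delta> m"
      have c1: "C1s h (fst (pscale \<tau> ee))" "C1s h (snd (pscale \<tau> ee))"
        unfolding pscale_def ee_def using C1s_const by auto
      have n1: "norm1 h (pscale \<tau> ee) = \<bar>\<tau>\<bar>" using norm1_pscale_ee[OF h] .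
      have mar3: "\<forall>s\<in>{-h..0}. snd y s + (\<sigma> + \<tau>) > Rm"
      proof
        fix s assume "s \<in> {-h..0}" from mar this have "snd y s + \<sigma> > Rm + m" by blast
        moreover have "\<bar>\<tau>\<bar> < m" using \<tau> by simp
        ultimately show "snd y s + (\<sigma> + \<tau>) > Rm" by linarith
      qed
      have U: "padd (sh \<sigma> y) (pscale \<tau> ee) \<in> Uset h Rm"
        unfolding padd_sh using mar3 by (simp add: Uset_def sh_def y C1s_add_const[OF h y(2)])
      have "\<bar>j (padd (sh \<sigma> y) (pscale \<tau> ee)) - j (sh \<sigma> y) - Dj (sh \<sigma> y) (pscale \<tau> ee)\<bar> \<le> (r/2) * \<bar>\<tau>\<bar>"
      proof -
        have "norm1 h (pscale \<tau> ee) < \<delta>" using n1 \<tau> by simp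
        with H c1 U show ?thesis unfolding n1[symmetric] by blast
      qed
      moreover have "Dj (sh \<sigma> y) (pscale \<tau> ee) = \<tau> * Dj (sh \<sigma> y) ee" using lin base contee by blast
      ultimately have E: "\<bar>j (sh (\<sigma> + \<tau>) y) - j (sh \<sigma> y) - \<tau> * Dj (sh \<sigma> y) ee\<bar> \<le> (r/2) * \<bar>\<tau>\<bar>"
        unfolding padd_sh by simp
      have "(j (sh (\<sigma> + \<tau>) y) - j (sh \<sigma> y)) / \<tau> - Dj (sh \<sigma> y) ee
          = (j (sh (\<sigma> + \<tau>) y) - j (sh \<sigma> y) - \<tau> * Dj (sh \<sigma> y) ee) / \<tau>"
        using \<tau> by (simp add: field_simps)
      then have "norm ((j (sh (\<sigma> + \<tau>) y) - j (sh \<sigma> y)) / \<tau> - Dj (sh \<sigma> y) ee)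
          = \<bar>j (sh (\<sigma> + \<tau>) y) - j (sh \<sigma> y) - \<tau> * Dj (sh \<sigma> y) ee\<bar> / \<bar>\<tau>\<bar>" by (simp add: abs_divide)
      also have "\<dots> \<le> r/2" using E \<tau> by (simp add: divide_le_eq)
      also have "\<dots> < r" using r by simp
      finally show "norm ((j (sh (\<sigma> + \<tau>) y) - j (sh \<sigma> y)) / \<tau> - Dj (sh \<sigma> y) ee) < r" .
    qed
  qed
qed

end

context ctx begin

lemma Uplus_Uset: "y \<in> Uplus h \<Longrightarrow> y \<in> Uset h Rm"
  unfolding Uplus_def Uset_def using Rm by force

lemma V_isCont: assumes "x \<in> X" "t \<ge> 0" shows "isCont (V x) t"
  using V_deriv[OF assms] by (rule DERIV_isCont)

lemma V_nonneg_all: assumes x: "x \<in> X" shows "\<forall>t\<ge>-h. V x t \<ge> 0"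
proof (rule ccontr)
  assume "\<not> (\<forall>t\<ge>-h. V x t \<ge> 0)"
  then obtain b where b: "b \<ge> -h" "V x b < 0" by (auto simp: not_le)
  have b0: "b > 0"
  proof (rule ccontr)
    assume "\<not> b > 0" then have "b \<in> {-h..0}" using b by auto
    then show False using init_nonneg[OF x] b by force
  qed
  define N where "N = {t\<in>{0..b}. V x t < 0}"
  have bN: "b \<in> N" unfolding N_def using b b0 by auto
  then have Nne: "N \<noteq> {}" by auto
  have bddN: "bdd_below N" unfolding N_def bdd_below_def by auto
  define t1 where "t1 = Inf N"
  have t1_0: "0 \<le> t1" unfolding t1_def by (rule cInf_greatest[OF Nne]) (auto simp: N_def)
  have t1b: "t1 \<le> b" unfolding t1_def by (rule cInf_lower[OF bN bddN])
  have before: "V x s \<ge> 0" if s: "-h \<le> s" "s < t1" for s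
  proof (cases "s \<le> 0")
    case True then show ?thesis using init_nonneg[OF x, of s] s by auto
  next
    case False
    show ?thesis
    proof (rule ccontr)
      assume "\<not> V x s \<ge> 0"
      then have "s \<in> N" unfolding N_def using False s t1b by auto
      then have "t1 \<le> s" unfolding t1_def by (rule cInf_lower[OF _ bddN])
      then show False using s by simp
    qed
  qed
  have at_t1: "V x t1 \<ge> 0"
  proof (cases "t1 = 0")
    case True then show ?thesis using init_nonneg[OF x, of 0] h by auto
  next
    case False
    then have t1p: "t1 > 0" using t1_0 by simp
    show ?thesis
    proof (rule ccontr)
      assume neg: "\<not> V x t1 \<ge> 0"
      have "(V x \<longlongrightarrow> V x t1) (at t1)" using V_isCont[OF x t1_0] unfolding isCont_def .
      then have "\<forall>\<^sub>F s in at t1. V x s < 0" using neg by (intro order_tendstoD(2)) auto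
      then obtain d where d: "d > 0" "\<forall>s. s \<noteq> t1 \<and> dist s t1 < d \<longrightarrow> V x s < 0"
        unfolding eventually_at by auto
      define s where "s = max (t1/2) (t1 - d/2)"
      have "s \<noteq> t1 \<and> dist s t1 < d" unfolding s_def dist_real_def using d t1p by auto
      then have "V x s < 0" using d by blast
      moreover have "V x s \<ge> 0" by (rule before) (use h t1p d in \<open>auto simp: s_def\<close>)
      ultimately show False by simp
    qed
  qed
  have nn: "V x s \<ge> 0" if "-h \<le> s" "s \<le> t1" for s
    using before at_t1 that by (cases "s = t1") auto
  have after: "\<exists>s. t1 \<le> s \<and> s < t1 + \<eta> \<and> V x s < 0" if "\<eta> > 0" for \<eta>
  proof -
    have "Inf N < t1 + \<eta>" using that unfolding t1_def by simp
    then obtain s where "s \<in> N" "s < t1 + \<eta>" using cInf_lessD[OF Nne] by blast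
    moreover have "t1 \<le> s" unfolding t1_def by (rule cInf_lower[OF \<open>s \<in> N\<close> bddN])
    ultimately show ?thesis unfolding N_def by auto
  qed
  define x0 where "x0 = Sflow sol t1 x"
  have x0C: "C1s h (fst x0)" "C1s h (snd x0)" using Sflow_C1[OF x t1_0] unfolding x0_def Sflow_eq by auto
  have x0U: "x0 \<in> Uplus h"
  proof -
    have "\<forall>s\<in>{-h..0}. fst x0 s \<ge> 0 \<and> snd x0 s \<ge> 0"
    proof
      fix s :: real assume s: "s \<in> {-h..0}"
      have "W x (t1 + s) \<ge> 0" by (rule W_nonneg[OF x]) (use s t1_0 in auto)
      moreover have "V x (t1 + s) \<ge> 0" by (rule nn) (use s t1_0 in auto)
      ultimately show "fst x0 s \<ge> 0 \<and> snd x0 s \<ge> 0" unfolding x0_def Sflow_eq seg_def by simp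
    qed
    then show ?thesis unfolding Uplus_def using x0C by simp
  qed
  have x0Us: "x0 \<in> Uset h Rm" using Uplus_Uset[OF x0U] .
  obtain Dj where lin: "\<forall>x\<in>Uset h Rm. \<forall>a b. \<forall>c. Cont h a \<and> Cont h b \<longrightarrow>
            Dj x (padd a b) = Dj x a + Dj x b \<and> Dj x (pscale c a) = c * Dj x a"
    and fr: "\<forall>x\<in>Uset h Rm. \<forall>\<epsilon>>0. \<exists>\<delta>>0. \<forall>y. C1s h (fst y) \<and> C1s h (snd y) \<and> norm1 h y < \<delta>
            \<and> padd x y \<in> Uset h Rm \<longrightarrow> \<bar>j (padd x y) - j x - Dj x y\<bar> \<le> \<epsilon> * norm1 h y"
    and cl3: "\<forall>x\<in>Uset h Rm. \<forall>\<epsilon>>0. \<exists>\<delta>>0. \<forall>x'\<in>Uset h Rm. d1 h x' x < \<delta> \<longrightarrow>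
            (\<forall>y. C1s h (fst y) \<and> C1s h (snd y) \<longrightarrow> \<bar>Dj x' y - Dj x y\<bar> \<le> \<epsilon> * norm1 h y)"
    using j_C1 by blast
  obtain \<delta>3 where \<delta>3: "\<delta>3 > 0" and H3: "\<forall>x'\<in>Uset h Rm. d1 h x' x0 < \<delta>3 \<longrightarrow>
            (\<forall>y. C1s h (fst y) \<and> C1s h (snd y) \<longrightarrow> \<bar>Dj x' y - Dj x0 y\<bar> \<le> 1 * norm1 h y)"
    using bspec[OF cl3 x0Us, rule_format, of 1] by auto
  have eeC: "C1s h (fst ee)" "C1s h (snd ee)" unfolding ee_def using C1s_const by auto
  have "pscale 1 ee = ee" unfolding pscale_def ee_def by simp
  then have n1ee: "norm1 h ee = 1" using norm1_pscale_ee[OF h, of 1] by simp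
  define M where "M = \<bar>Dj x0 ee\<bar> + 1"
  have Mp: "M > 0" unfolding M_def by simp
  have Mb: "\<bar>Dj x' ee\<bar> \<le> M" if "x' \<in> Uset h Rm" "d1 h x' x0 < \<delta>3" for x'
  proof -
    have "\<bar>Dj x' ee - Dj x0 ee\<bar> \<le> 1 * norm1 h ee" using H3 that eeC by blast
    then show ?thesis unfolding M_def n1ee by linarith
  qed
  have "\<delta>3/2 > 0" using \<delta>3 by simp
  then obtain \<delta>4 where \<delta>4: "\<delta>4 > 0" and H4: "\<forall>t\<ge>0. \<forall>x'\<in>X. \<bar>t - t1\<bar> < \<delta>4 \<and> d1 h x' x < \<delta>4 \<longrightarrow>
        d1 h (Sflow sol t x') (Sflow sol t1 x) < \<delta>3/2"
    using sol_cont t1_0 x by meson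
  have st: "d1 h (Sflow sol t x) x0 < \<delta>3/2" if "t \<ge> 0" "\<bar>t - t1\<bar> < \<delta>4" for t
    using H4 that x d1_self[OF h, of x] \<delta>4 unfolding x0_def by auto
  define \<kappa> where "\<kappa> = min (\<delta>3/2) (-Rm/2)"
  have \<kappa>p: "\<kappa> > 0" unfolding \<kappa>_def using \<delta>3 Rm by simp
  obtain \<delta>5 where \<delta>5: "\<delta>5 > 0" "\<forall>s. \<bar>s - t1\<bar> < \<delta>5 \<longrightarrow> V x s > -\<kappa>"
  proof -
    have "(V x \<longlongrightarrow> V x t1) (at t1)" using V_isCont[OF x t1_0] unfolding isCont_def .
    then have "\<forall>\<^sub>F s in at t1. V x s > -\<kappa>" using at_t1 \<kappa>p by (intro order_tendstoD(1)) auto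
    then obtain d where d: "d > 0" "\<forall>s. s \<noteq> t1 \<and> dist s t1 < d \<longrightarrow> V x s > -\<kappa>"
      unfolding eventually_at by auto
    have "\<forall>s. \<bar>s - t1\<bar> < d \<longrightarrow> V x s > -\<kappa>"
    proof (intro allI impI)
      fix s assume "\<bar>s - t1\<bar> < d"
      then show "V x s > -\<kappa>" using d at_t1 \<kappa>p unfolding dist_real_def by (cases "s = t1") auto
    qed
    then show ?thesis using that d(1) by blast
  qed
  define \<eta> where "\<eta> = min (min \<delta>4 \<delta>5) (1/M) / 2"
  have \<eta>p: "\<eta> > 0" unfolding \<eta>_def using \<delta>4 \<delta>5 Mp by simp
  have \<eta>4: "\<eta> < \<delta>4" "\<eta> < \<delta>5" unfolding \<eta>_def using \<delta>4 \<delta>5 Mp by auto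
  have \<eta>M: "M * \<eta> \<le> 1/2"
  proof -
    have "\<eta> \<le> (1/M)/2" unfolding \<eta>_def by (simp add: divide_right_mono)
    then have "M * \<eta> \<le> M * ((1/M)/2)" by (rule mult_left_mono) (use Mp in auto)
    also have "M * ((1/M)/2) = 1/2" using Mp by simp
    finally show ?thesis .
  qed
  have Vc: "continuous_on {t1..t1+\<eta>} (V x)"
    by (rule continuous_on_subset[OF V_cont[OF x]]) (use t1_0 h in auto)
  obtain t2 where t2: "t2 \<in> {t1..t1+\<eta>}" and t2min: "\<forall>s\<in>{t1..t1+\<eta>}. V x t2 \<le> V x s"
    using continuous_attains_inf[OF compact_Icc _ Vc] \<eta>p by auto
  obtain s0 where s0: "t1 \<le> s0" "s0 < t1 + \<eta>" "V x s0 < 0" using after[OF \<eta>p] by blast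
  have Vt2: "V x t2 < 0" using t2min s0 by force
  define c where "c = - V x t2"
  have cp: "c > 0" unfolding c_def using Vt2 by simp
  have ck: "c < \<kappa>"
  proof -
    have "\<bar>t2 - t1\<bar> < \<delta>5" using t2 \<eta>4 by auto
    then show ?thesis using \<delta>5 unfolding c_def by auto
  qed
  have t12: "t1 < t2" using t2 at_t1 Vt2 by (cases "t1 = t2") auto
  have jb: "j (seg (W x) t, seg (V x) t) \<ge> - c * M" if t: "t1 < t" "t < t2" for t
  proof -
    define xt where "xt = Sflow sol t x"
    have t0: "t \<ge> 0" using t t1_0 by simp
    have xtC: "C1s h (fst xt)" "C1s h (snd xt)" using Sflow_C1[OF x t0] unfolding xt_def Sflow_eq by auto
    have xte: "xt = (seg (W x) t, seg (V x) t)" unfolding xt_def Sflow_eq ..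
    have dxt: "d1 h xt x0 < \<delta>3/2" unfolding xt_def by (rule st[OF t0]) (use t t2 \<eta>4 in auto)
    have win: "snd xt s \<ge> -c" if s: "s \<in> {-h..0}" for s
    proof (cases "t + s \<le> t1")
      case True
      have "V x (t + s) \<ge> 0" by (rule nn) (use True s t t1_0 in auto)
      then show ?thesis using cp unfolding xte seg_def by simp
    next
      case False
      then have "t + s \<in> {t1..t1+\<eta>}" using s t t2 by auto
      then have "V x t2 \<le> V x (t + s)" using t2min by blast
      then show ?thesis unfolding xte seg_def c_def by simp
    qed
    have winW: "fst xt s \<ge> 0" if s: "s \<in> {-h..0}" for s
      using W_nonneg[OF x, of "t+s"] s t0 unfolding xte seg_def by simp
    have mar: "\<forall>s\<in>{-h..0}. snd xt s + \<sigma> > Rm + (-Rm/2)" if "\<sigma> \<ge> 0" for \<sigma>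
    proof
      fix s assume "s \<in> {-h..0}"
      from win[OF this] have "snd xt s \<ge> -c" .
      moreover have "-c > Rm/2" using ck unfolding \<kappa>_def by simp
      ultimately show "snd xt s + \<sigma> > Rm + (-Rm/2)" using that by linarith
    qed
    have mpos: "-Rm/2 > 0" using Rm by simp
    have D: "((\<lambda>\<sigma>. j (sh \<sigma> xt)) has_real_derivative Dj (sh \<sigma> xt) ee) (at \<sigma>)" if "0 \<le> \<sigma>" for \<sigma>
      by (rule shift_deriv[OF lin fr xtC mpos mar[OF that]])
    obtain \<xi> where \<xi>: "0 < \<xi>" "\<xi> < c" "j (sh c xt) - j (sh 0 xt) = (c - 0) * Dj (sh \<xi> xt) ee"
      using MVT2[OF cp, of "\<lambda>\<sigma>. j (sh \<sigma> xt)" "\<lambda>\<sigma>. Dj (sh \<sigma> xt) ee"] D by auto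
    have shU: "sh \<xi> xt \<in> Uset h Rm"
    proof -
      have m2: "\<forall>s\<in>{-h..0}. snd xt s + \<xi> > Rm + (-Rm/2)" using mar[of \<xi>] \<xi> by simp
      have "\<forall>s\<in>{-h..0}. snd xt s + \<xi> > Rm"
      proof
        fix s assume "s \<in> {-h..0}" with m2 have "snd xt s + \<xi> > Rm + (-Rm/2)" by blast
        then show "snd xt s + \<xi> > Rm" using Rm by linarith
      qed
      then show ?thesis by (simp add: Uset_def sh_def xtC C1s_add_const[OF h xtC(2)])
    qed
    have "d1 h (sh \<xi> xt) x0 \<le> d1 h xt x0 + \<bar>\<xi>\<bar>" by (rule d1_sh[OF h xtC x0C])
    also have "\<dots> < \<delta>3" using dxt \<xi> ck unfolding \<kappa>_def by auto
    finally have DM: "\<bar>Dj (sh \<xi> xt) ee\<bar> \<le> M" using Mb shU by blast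
    have shP: "sh c xt \<in> Uplus h"
    proof -
      have "\<forall>s\<in>{-h..0}. fst xt s \<ge> 0 \<and> snd xt s + c \<ge> 0" using win winW by force
      then show ?thesis by (simp add: Uplus_def sh_def xtC C1s_add_const[OF h xtC(2)])
    qed
    have jc: "j (sh c xt) \<ge> 0" using j_nonneg shP by blast
    have "c * Dj (sh \<xi> xt) ee \<le> c * M" using DM cp by (intro mult_left_mono) auto
    moreover have "j xt = j (sh c xt) - c * Dj (sh \<xi> xt) ee" using \<xi>(3) unfolding sh_0 by simp
    ultimately have "j xt \<ge> - c * M" using jc by linarith
    then show ?thesis unfolding xte .
  qed
  have low: "V x t2 \<ge> (- c * M)/\<mu> + (V x t1 - (- c * M)/\<mu>) * exp (-\<mu>*(t2-t1))"
  proof (rule lin_lower[OF mu _ _ _ ])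
    show "t1 \<le> t2" using t12 by simp
    show "continuous_on {t1..t2} (V x)" by (rule continuous_on_subset[OF V_cont[OF x]]) (use t1_0 h in auto)
    show "(V x has_real_derivative j (seg (W x) t, seg (V x) t) - \<mu> * V x t) (at t)" if "t1 < t" "t < t2" for t
      using V_deriv[OF x] that t1_0 by auto
    show "j (seg (W x) t, seg (V x) t) - \<mu> * V x t \<ge> - c * M - \<mu> * V x t" if "t1 < t" "t < t2" for t
      using jb[OF that] by simp
  qed
  define E where "E = exp (-\<mu>*(t2-t1))"
  have E1: "E \<ge> 1 - \<mu>*(t2-t1)" unfolding E_def using exp_ge_add_one_self[of "-\<mu>*(t2-t1)"] by simp
  have E0: "E > 0" unfolding E_def by simp
  have cMp: "c * M / \<mu> \<ge> 0" using cp Mp mu by simp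
  have "V x t2 \<ge> - (c * M/\<mu>) + (c*M/\<mu>) * E + V x t1 * E" using low unfolding E_def by (simp add: algebra_simps)
  moreover have "V x t1 * E \<ge> 0" using at_t1 E0 by simp
  moreover have "(c*M/\<mu>) * E \<ge> (c*M/\<mu>) * (1 - \<mu>*(t2-t1))" using E1 cMp by (intro mult_left_mono) auto
  moreover have "(c*M/\<mu>) * (1 - \<mu>*(t2-t1)) = c*M/\<mu> - c*M*(t2-t1)" using mu by (simp add: field_simps)
  ultimately have "V x t2 \<ge> - c*M*(t2-t1)" by linarith
  moreover have "c*M*(t2-t1) \<le> c*(M*\<eta>)"
  proof -
    have "t2 - t1 \<le> \<eta>" using t2 by auto
    then have "M*(t2-t1) \<le> M*\<eta>" using Mp by (intro mult_left_mono) auto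
    then show ?thesis using cp by (simp add: mult_left_mono mult.assoc)
  qed
  moreover have "c*(M*\<eta>) \<le> c/2" using \<eta>M cp by (metis mult_left_mono less_imp_le times_divide_eq_right mult_1_right)
  ultimately have "V x t2 \<ge> -c/2" by linarith
  then show False unfolding c_def using Vt2 by simp
qed

lemma V_nonneg: "x \<in> X \<Longrightarrow> t \<ge> -h \<Longrightarrow> V x t \<ge> 0" using V_nonneg_all by blast

end

context ctx begin

lemma traj_C1: assumes "x \<in> X" "t \<ge> 0"
  shows "C1s h (seg (W x) t)" "C1s h (seg (V x) t)" using Sflow_C1[OF assms] by auto

lemma traj_Uplus: assumes x: "x \<in> X" and t: "t \<ge> 0" shows "(seg (W x) t, seg (V x) t) \<in> Uplus h"
proof -
  have "\<forall>s\<in>{-h..0}. seg (W x) t s \<ge> 0 \<and> seg (V x) t s \<ge> 0"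
  proof
    fix s :: real assume s: "s \<in> {-h..0}"
    have "t + s \<ge> -h" using s t by auto
    then show "seg (W x) t s \<ge> 0 \<and> seg (V x) t s \<ge> 0"
      unfolding seg_def using W_nonneg[OF x] V_nonneg[OF x] by blast
  qed
  then show ?thesis unfolding Uplus_def using traj_C1[OF x t] by simp
qed

lemma j_traj_nonneg: "x \<in> X \<Longrightarrow> t \<ge> 0 \<Longrightarrow> j (seg (W x) t, seg (V x) t) \<ge> 0"
  using j_nonneg traj_Uplus by blast

lemma V_cont_ab: assumes "x \<in> X" "0 \<le> a" shows "continuous_on {a..b} (V x)"
  by (rule continuous_on_subset[OF V_cont[OF assms(1)]]) (use assms h in auto)

lemma W_cont_ab: assumes "x \<in> X" "0 \<le> a" shows "continuous_on {a..b} (W x)"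
  by (rule continuous_on_subset[OF W_cont[OF assms(1)]]) (use assms h in auto)

lemma V_lower_gen: assumes x: "x \<in> X" and ab: "0 \<le> a" "a \<le> b"
  and K: "\<And>t. a < t \<Longrightarrow> t < b \<Longrightarrow> j (seg (W x) t, seg (V x) t) \<ge> K"
  shows "V x b \<ge> K/\<mu> + (V x a - K/\<mu>) * exp (-\<mu>*(b-a))"
proof (rule lin_lower[OF mu ab(2) V_cont_ab[OF x ab(1)]])
  show "(V x has_real_derivative j (seg (W x) t, seg (V x) t) - \<mu> * V x t) (at t)" if "a < t" "t < b" for t
    using V_deriv[OF x] that ab by auto
  show "j (seg (W x) t, seg (V x) t) - \<mu> * V x t \<ge> K - \<mu> * V x t" if "a < t" "t < b" for t
    using K[OF that] by simp
qed

lemma V_upper_gen: assumes x: "x \<in> X" and ab: "0 \<le> a" "a \<le> b"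
  and K: "\<And>t. a < t \<Longrightarrow> t < b \<Longrightarrow> j (seg (W x) t, seg (V x) t) \<le> K"
  shows "V x b \<le> K/\<mu> + (V x a - K/\<mu>) * exp (-\<mu>*(b-a))"
proof (rule lin_upper[OF mu ab(2) V_cont_ab[OF x ab(1)]])
  show "(V x has_real_derivative j (seg (W x) t, seg (V x) t) - \<mu> * V x t) (at t)" if "a < t" "t < b" for t
    using V_deriv[OF x] that ab by auto
  show "j (seg (W x) t, seg (V x) t) - \<mu> * V x t \<le> K - \<mu> * V x t" if "a < t" "t < b" for t
    using K[OF that] by simp
qed

lemma V_decay: assumes x: "x \<in> X" and ab: "0 \<le> a" "a \<le> b"
  shows "V x b \<ge> V x a * exp (-\<mu>*(b-a))"
  using V_lower_gen[OF x ab, of 0] j_traj_nonneg[OF x] ab by auto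

definition dq where "dq = (SOME d. d > 0 \<and> (\<exists>zs\<ge>0. \<forall>z\<ge>zs. q z \<le> -d))"
definition zs where "zs = (SOME z. z \<ge> 0 \<and> (\<forall>y\<ge>z. q y \<le> -dq))"

lemma dq: "dq > 0" "zs \<ge> 0" "\<And>z. z \<ge> zs \<Longrightarrow> q z \<le> -dq"
proof -
  have a: "dq > 0 \<and> (\<exists>zs\<ge>0. \<forall>z\<ge>zs. q z \<le> -dq)" unfolding dq_def by (rule someI_ex) (use q_neg in blast)
  then obtain z0 where "z0 \<ge> 0 \<and> (\<forall>y\<ge>z0. q y \<le> -dq)" by blast
  then have b: "zs \<ge> 0 \<and> (\<forall>y\<ge>zs. q y \<le> -dq)" unfolding zs_def by (rule someI)
  show "dq > 0" using a by blast
  show "zs \<ge> 0" using b by blast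
  show "\<And>z. z \<ge> zs \<Longrightarrow> q z \<le> -dq" using b by blast
qed

definition Kc where "Kc = \<mu> * (2 * zs + 2)"
lemma Kc: "Kc > 0" unfolding Kc_def using mu dq(2) by simp

definition L0 where "L0 = (SOME L. \<forall>x\<in>Uplus h. (\<forall>s\<in>{-h..0}. fst x s \<ge> L) \<longrightarrow> j x \<ge> Kc)"
definition Lb where "Lb = max L0 1"
lemma Lb: "Lb \<ge> 1" "\<And>y. y \<in> Uplus h \<Longrightarrow> (\<forall>s\<in>{-h..0}. fst y s \<ge> Lb) \<Longrightarrow> j y \<ge> Kc"
proof -
  have "\<forall>x\<in>Uplus h. (\<forall>s\<in>{-h..0}. fst x s \<ge> L0) \<longrightarrow> j x \<ge> Kc"
    unfolding L0_def by (rule someI_ex) (use j_large Kc in blast)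
  then show "\<And>y. y \<in> Uplus h \<Longrightarrow> (\<forall>s\<in>{-h..0}. fst y s \<ge> Lb) \<Longrightarrow> j y \<ge> Kc"
    unfolding Lb_def by force
  show "Lb \<ge> 1" unfolding Lb_def by simp
qed

definition Wb where "Wb = Lb * exp (Qb * (h + 1/\<mu>))"
lemma Wb: "Wb \<ge> Lb" "Wb > 0"
proof -
  have "exp (Qb * (h + 1/\<mu>)) \<ge> 1" using Qb(1) h mu by simp
  then have "Lb * 1 \<le> Lb * exp (Qb * (h + 1/\<mu>))" using Lb(1) by (intro mult_left_mono) auto
  then show "Wb \<ge> Lb" unfolding Wb_def by simp
  then show "Wb > 0" using Lb(1) by simp
qed

lemma exp_half: fixes y :: real assumes "y \<ge> 1" shows "exp (-y) \<le> 1/2"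
proof -
  have "exp (1::real) \<ge> 2" using exp_ge_add_one_self[of "1::real"] by simp
  moreover have "exp y \<ge> exp (1::real)" using assms by simp
  ultimately have "exp y \<ge> 2" by linarith
  then show ?thesis by (simp add: exp_minus divide_simps)
qed

lemma window_q_neg:
  assumes x: "x \<in> X" and t': "t' \<ge> 0" and big: "\<forall>r\<in>{t'..s}. W x r \<ge> Lb"
    and r: "t' + h + 1/\<mu> \<le> r" "r \<le> s"
  shows "q (V x r) \<le> -dq"
proof -
  have jK: "j (seg (W x) u, seg (V x) u) \<ge> Kc" if u: "t' + h < u" "u < r" for u
  proof (rule Lb(2)[OF traj_Uplus[OF x]])
    show "0 \<le> u" using u t' h by simp
    show "\<forall>sa\<in>{-h..0}. Lb \<le> fst (seg (W x) u, seg (V x) u) sa"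
    proof
      fix sa :: real assume "sa \<in> {-h..0}"
      then have "u + sa \<in> {t'..s}" using u r by auto
      then show "Lb \<le> fst (seg (W x) u, seg (V x) u) sa" using big unfolding seg_def by simp
    qed
  qed
  have mu1: "1/\<mu> > 0" using mu by simp
  have ab: "0 \<le> t' + h" "t' + h \<le> r" using t' h r(1) mu1 by linarith+
  have "V x r \<ge> Kc/\<mu> + (V x (t'+h) - Kc/\<mu>) * exp (-\<mu>*(r-(t'+h)))"
    by (rule V_lower_gen[OF x ab]) (use jK in auto)
  moreover have "V x (t'+h) \<ge> 0" using V_nonneg[OF x] t' h by simp
  moreover have E: "exp (-\<mu>*(r-(t'+h))) \<le> 1/2"
  proof -
    have "\<mu>*(r-(t'+h)) \<ge> \<mu> * (1/\<mu>)" using r mu by (intro mult_left_mono) auto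
    then have "\<mu>*(r-(t'+h)) \<ge> 1" using mu by simp
    from exp_half[OF this] show ?thesis by simp
  qed
  moreover have "exp (-\<mu>*(r-(t'+h))) \<ge> 0" by simp
  ultimately have "V x r \<ge> Kc/\<mu> - (Kc/\<mu>) * (1/2)"
  proof -
    assume a: "V x r \<ge> Kc/\<mu> + (V x (t'+h) - Kc/\<mu>) * exp (-\<mu>*(r-(t'+h)))"
      and b: "V x (t'+h) \<ge> 0" and e1: "exp (-\<mu>*(r-(t'+h))) \<le> 1/2" and e0: "exp (-\<mu>*(r-(t'+h))) \<ge> 0"
    have kp: "Kc/\<mu> \<ge> 0" using Kc mu by simp
    have "(V x (t'+h) - Kc/\<mu>) * exp (-\<mu>*(r-(t'+h))) \<ge> (- Kc/\<mu>) * exp (-\<mu>*(r-(t'+h)))"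
      using b e0 by (intro mult_right_mono) auto
    moreover have "(- Kc/\<mu>) * exp (-\<mu>*(r-(t'+h))) \<ge> (- Kc/\<mu>) * (1/2)"
      using kp e1 by (intro mult_left_mono_neg) auto
    ultimately show ?thesis using a by linarith
  qed
  moreover have "Kc/\<mu> - (Kc/\<mu>) * (1/2) = zs + 1" using mu by (simp add: Kc_def field_simps)
  ultimately have "V x r \<ge> zs + 1" by linarith
  then show ?thesis using dq(3) by simp
qed

lemma W_stays_bounded:
  assumes x: "x \<in> X" and t': "t' \<ge> 0" "W x t' \<le> Lb" and s: "s \<ge> t'"
  shows "W x s \<le> Wb"
proof (rule ccontr)
  assume "\<not> W x s \<le> Wb"
  then have sbig: "W x s > Wb" by simp
  then have "W x s > Lb" using Wb by simp
  then obtain c where c: "t' \<le> c" "c < s" "W x c = Lb" "\<forall>r. c < r \<and> r \<le> s \<longrightarrow> Lb < W x r"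
    using last_time[OF s W_cont_ab[OF x t'(1)] t'(2)] by blast
  have c0: "c \<ge> 0" using c t' by simp
  have big: "\<forall>r\<in>{c..s}. W x r \<ge> Lb" using c by (metis atLeastAtMost_iff less_eq_real_def)
  show False
  proof (cases "s - c < h + 1/\<mu>")
    case True
    have "W x s \<le> W x c * exp (Qb * (s - c))" using W_Q(2)[OF x c0] c by simp
    also have "\<dots> \<le> Lb * exp (Qb * (h + 1/\<mu>))" using c True Qb(1) Lb(1) by simp
    finally show False using sbig unfolding Wb_def by simp
  next
    case False
    define c' where "c' = c + h + 1/\<mu>"
    have c's: "c' \<le> s" unfolding c'_def using False by simp
    have qn: "\<forall>r\<in>{c'..s}. q (V x r) \<le> 0"
    proof
      fix r assume "r \<in> {c'..s}"
      then have "q (V x r) \<le> -dq" using window_q_neg[OF x c0 big] unfolding c'_def by auto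
      then show "q (V x r) \<le> 0" using dq(1) by simp
    qed
    have c'0: "0 \<le> c'" unfolding c'_def using c0 h mu by (simp add: add_nonneg_nonneg)
    have "W x s \<le> W x c' * exp (0 * (s - c'))" by (rule W_upper[OF x c'0 c's qn])
    also have "\<dots> = W x c'" by simp
    also have "W x c' \<le> W x c * exp (Qb * (c' - c))"
      by (rule W_Q(2)[OF x c0]) (use h mu in \<open>simp add: c'_def add_nonneg_nonneg\<close>)
    also have "\<dots> = Wb" unfolding c'_def Wb_def c(3) by (simp add: algebra_simps)
    finally show False using sbig by simp
  qed
qed

lemma W_hits_low: assumes x: "x \<in> X" shows "\<exists>T\<ge>0. W x T \<le> Lb"
proof (rule ccontr)
  assume nex: "\<not> (\<exists>T\<ge>0. W x T \<le> Lb)"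
  have big0: "\<forall>r\<ge>0. W x r > Lb"
  proof (intro allI impI)
    fix r :: real assume r0: "r \<ge> 0"
    show "W x r > Lb"
    proof (rule ccontr)
      assume "\<not> W x r > Lb" then have "W x r \<le> Lb" by simp
      with r0 nex show False by blast
    qed
  qed
  define T0 where "T0 = h + 1/\<mu>"
  have T00: "T0 \<ge> 0" unfolding T0_def using h mu by (simp add: add_nonneg_nonneg)
  define W0 where "W0 = W x T0"
  have W0p: "W0 > 0" unfolding W0_def using big0 T00 Lb(1) by force
  define d where "d = W0 / (Lb * dq)"
  have dp: "d > 0" unfolding d_def using W0p Lb(1) dq(1) by simp
  define s where "s = T0 + d"
  have qn: "\<forall>r\<in>{T0..s}. q (V x r) \<le> -dq"
  proof
    fix r assume r: "r \<in> {T0..s}"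
    have big: "\<forall>r\<in>{0..s}. W x r \<ge> Lb"
    proof
      fix r assume "r \<in> {0..s}" then have "r \<ge> 0" by simp
      with big0 have "W x r > Lb" by blast
      then show "W x r \<ge> Lb" by simp
    qed
    show "q (V x r) \<le> -dq" by (rule window_q_neg[OF x _ big]) (use r in \<open>auto simp: T0_def\<close>)
  qed
  have "W x s \<le> W0 * exp (-dq * (s - T0))" unfolding W0_def by (rule W_upper[OF x T00 _ qn]) (use dp in \<open>simp add: s_def\<close>)
  also have "exp (-dq * (s - T0)) = 1 / exp (dq * d)" unfolding s_def by (simp add: exp_minus inverse_eq_divide)
  finally have Ws: "W x s \<le> W0 / exp (dq * d)" by simp
  have "exp (dq * d) \<ge> 1 + dq * d" by (rule exp_ge_add_one_self)
  moreover have "dq * d = W0 / Lb" unfolding d_def using dq(1) by simp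
  ultimately have ee: "1 + W0 / Lb \<le> exp (dq * d)" by simp
  have pos: "0 < 1 + W0 / Lb" using W0p Lb(1) by (simp add: add_pos_pos)
  have "W0 / exp (dq * d) \<le> W0 / (1 + W0 / Lb)"
    by (rule divide_left_mono[OF ee]) (use W0p pos in auto)
  also have "W0 / (1 + W0 / Lb) = W0 * Lb / (Lb + W0)" using Lb(1) by (simp add: field_simps)
  also have "\<dots> < Lb" using W0p Lb(1) by (simp add: divide_less_eq)
  finally have "W x s < Lb" using Ws by linarith
  moreover have "W x s > Lb" using big0 T00 dp unfolding s_def by simp
  ultimately show False by simp
qed

lemma W_eventually: assumes x: "x \<in> X" shows "\<exists>T\<ge>0. \<forall>s\<ge>T. W x s \<le> Wb"
  using W_hits_low[OF x] W_stays_bounded[OF x] by blast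

end

context ctx begin

definition B1 where "B1 = {\<phi>. C1s h \<phi> \<and> (\<forall>s\<in>{-h..0}. \<phi> s \<ge> 0) \<and> norm1s h \<phi> \<le> Wb + Qb*Wb}"
definition B2 where "B2 = {\<psi>. C1s h \<psi> \<and> (\<forall>s\<in>{-h..0}. \<psi> s \<ge> 0)}"

lemma J_ex: "\<exists>J. \<forall>y\<in>B1 \<times> B2. j y \<le> J"
proof -
  have "B1 \<times> B2 \<subseteq> Uplus h" unfolding B1_def B2_def Uplus_def by auto
  moreover have "bounded1s h B1" unfolding bounded1s_def B1_def by auto
  ultimately have "bounded (j ` (B1 \<times> B2))" using j_bdd by blast
  then obtain J where "\<forall>z\<in>j ` (B1 \<times> B2). norm z \<le> J" unfolding bounded_iff by blast
  then have "\<forall>y\<in>B1 \<times> B2. j y \<le> J" by (metis abs_le_D1 image_eqI real_norm_def)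
  then show ?thesis by blast
qed

definition Jb where "Jb = max (SOME J. \<forall>y\<in>B1 \<times> B2. j y \<le> J) 1"
lemma Jb: "Jb \<ge> 1" "\<And>y. y \<in> B1 \<times> B2 \<Longrightarrow> j y \<le> Jb"
proof -
  have "\<forall>y\<in>B1 \<times> B2. j y \<le> (SOME J. \<forall>y\<in>B1 \<times> B2. j y \<le> J)" by (rule someI_ex[OF J_ex])
  then show "\<And>y. y \<in> B1 \<times> B2 \<Longrightarrow> j y \<le> Jb" unfolding Jb_def by force
  show "Jb \<ge> 1" unfolding Jb_def by simp
qed

definition Vb where "Vb = Jb/\<mu> + 1"
lemma Vb: "Vb > 0" unfolding Vb_def using Jb(1) mu by (simp add: add_pos_nonneg)

lemma traj_B1: assumes x: "x \<in> X" and T: "T \<ge> 0" "\<forall>s\<ge>T. W x s \<le> Wb" and t: "t \<ge> T + h"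
  shows "seg (W x) t \<in> B1"
proof -
  have t0: "t \<ge> 0" using t T h by simp
  have bW: "\<forall>s\<in>{-h..0}. \<bar>seg (W x) t s\<bar> \<le> Wb"
  proof
    fix s assume s: "s \<in> {-h..0}"
    have "W x (t+s) \<ge> 0" using W_nonneg[OF x, of "t+s"] s t0 by simp
    moreover have "W x (t+s) \<le> Wb" using T(2) s t by simp
    ultimately show "\<bar>seg (W x) t s\<bar> \<le> Wb" unfolding seg_def by simp
  qed
  have bD: "\<forall>s\<in>{-h..0}. \<bar>der h (seg (W x) t) s\<bar> \<le> Qb * Wb"
  proof
    fix s assume s: "s \<in> {-h..0}"
    have ts: "t + s \<ge> 0" "t + s \<ge> T" using s t h T by auto
    have "der h (seg (W x) t) s = q (V x (t+s)) * W x (t+s)"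
      using Sflow_C1(2)[OF x t0] s dW_eq[OF x ts(1)] by simp
    moreover have "\<bar>q (V x (t+s))\<bar> \<le> Qb" using qV_bound[OF x] ts h by simp
    moreover have "W x (t+s) \<ge> 0" "W x (t+s) \<le> Wb" using W_nonneg[OF x, of "t+s"] ts T(2) h by auto
    ultimately show "\<bar>der h (seg (W x) t) s\<bar> \<le> Qb * Wb"
      by (simp add: abs_mult mult_mono Qb(1) less_imp_le)
  qed
  have "norm1s h (seg (W x) t) \<le> Wb + Qb * Wb"
    unfolding norm1s_def using norm0s_le[OF _ bW] norm0s_le[OF _ bD] h by (simp add: add_mono)
  moreover have "\<forall>s\<in>{-h..0}. seg (W x) t s \<ge> 0" using bW W_nonneg[OF x] t0 unfolding seg_def by auto
  ultimately show ?thesis unfolding B1_def using traj_C1(1)[OF x t0] by simp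
qed

lemma j_traj_le: assumes x: "x \<in> X" and T: "T \<ge> 0" "\<forall>s\<ge>T. W x s \<le> Wb" and t: "t \<ge> T + h"
  shows "j (seg (W x) t, seg (V x) t) \<le> Jb"
proof (rule Jb(2))
  have t0: "t \<ge> 0" using t T h by simp
  have "seg (V x) t \<in> B2" unfolding B2_def using traj_C1(2)[OF x t0] V_nonneg[OF x] t0 unfolding seg_def by auto
  then show "(seg (W x) t, seg (V x) t) \<in> B1 \<times> B2" using traj_B1[OF assms] by simp
qed

lemma bounds_eventually: assumes x: "x \<in> X" shows "\<exists>T\<ge>0. \<forall>s\<ge>T. W x s \<le> Wb \<and> V x s \<le> Vb"
proof -
  obtain T where T: "T \<ge> 0" "\<forall>s\<ge>T. W x s \<le> Wb" using W_eventually[OF x] by blast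
  define T1 where "T1 = T + h"
  have T10: "T1 \<ge> 0" unfolding T1_def using T h by simp
  define v1 where "v1 = V x T1"
  have v10: "v1 \<ge> 0" unfolding v1_def using V_nonneg[OF x] T10 h by simp
  define T2 where "T2 = T1 + v1/\<mu>"
  have T2: "T2 \<ge> T1" unfolding T2_def using v10 mu by simp
  have "\<forall>s\<ge>T2. W x s \<le> Wb \<and> V x s \<le> Vb"
  proof (intro allI impI conjI)
    fix s assume s: "s \<ge> T2"
    show "W x s \<le> Wb" using T s T2 h unfolding T1_def by simp
    have "V x s \<le> Jb/\<mu> + (V x T1 - Jb/\<mu>) * exp (-\<mu>*(s-T1))"
      by (rule V_upper_gen[OF x T10]) (use s T2 j_traj_le[OF x T] in \<open>auto simp: T1_def\<close>)
    moreover have "(V x T1 - Jb/\<mu>) * exp (-\<mu>*(s-T1)) \<le> v1 * exp (-\<mu>*(s-T1))"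
      unfolding v1_def using Jb(1) mu by (intro mult_right_mono) auto
    moreover have "v1 * exp (-\<mu>*(s-T1)) \<le> 1"
    proof -
      have "exp (\<mu>*(s-T1)) \<ge> 1 + \<mu>*(s-T1)" by (rule exp_ge_add_one_self)
      moreover have "\<mu>*(s-T1) \<ge> \<mu>*(v1/\<mu>)" using s unfolding T2_def using mu by (intro mult_left_mono) auto
      moreover have "\<mu>*(v1/\<mu>) = v1" using mu by simp
      ultimately have "exp (\<mu>*(s-T1)) \<ge> 1 + v1" by linarith
      then have "v1 / exp (\<mu>*(s-T1)) \<le> v1 / (1 + v1)" using v10 by (intro divide_left_mono) auto
      also have "\<dots> \<le> 1" using v10 by simp
      finally show ?thesis by (simp add: exp_minus inverse_eq_divide)
    qed
    ultimately show "V x s \<le> Vb" unfolding Vb_def by linarith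
  qed
  then show ?thesis using T10 T2 by (intro exI[of _ T2]) auto
qed

end

context ctx begin

lemma z0_ex: "\<exists>z0>0. \<forall>z\<in>{0..z0}. q z \<ge> q 0 / 2"
proof -
  have "isCont q 0" using q_cont continuous_on_eq_continuous_at[of "{Rm<..}" q] Rm by auto
  then have "(q \<longlongrightarrow> q 0) (at 0)" unfolding isCont_def .
  then have "\<forall>\<^sub>F z in at 0. q z > q 0 / 2" using q0 by (intro order_tendstoD(1)) auto
  then obtain d where d: "d > 0" "\<forall>z. z \<noteq> 0 \<and> dist z 0 < d \<longrightarrow> q z > q 0 / 2"
    unfolding eventually_at by auto
  have "\<forall>z\<in>{0..d/2}. q z \<ge> q 0 / 2"
  proof
    fix z :: real assume z: "z \<in> {0..d/2}"
    show "q z \<ge> q 0 / 2"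
    proof (cases "z = 0")
      case True then show ?thesis using q0 by simp
    next
      case False
      then have "q z > q 0 / 2" using d z by (auto simp: dist_real_def)
      then show ?thesis by simp
    qed
  qed
  then show ?thesis using d(1) by (intro exI[of _ "d/2"]) auto
qed

definition z0 where "z0 = (SOME z0. z0 > 0 \<and> (\<forall>z\<in>{0..z0}. q z \<ge> q 0 / 2))"
definition \<alpha> where "\<alpha> = q 0 / 2"
lemma z0: "z0 > 0" "\<And>z. 0 \<le> z \<Longrightarrow> z \<le> z0 \<Longrightarrow> q z \<ge> \<alpha>" "\<alpha> > 0"
proof -
  have "z0 > 0 \<and> (\<forall>z\<in>{0..z0}. q z \<ge> q 0 / 2)" unfolding z0_def by (rule someI_ex[OF z0_ex])
  then show "z0 > 0" "\<And>z. 0 \<le> z \<Longrightarrow> z \<le> z0 \<Longrightarrow> q z \<ge> \<alpha>" unfolding \<alpha>_def by auto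
  show "\<alpha> > 0" unfolding \<alpha>_def using q0 by simp
qed

definition d1b where "d1b = (SOME \<delta>. \<delta> > 0 \<and> (\<forall>x\<in>Uplus h. norm0s h (fst x) \<le> \<delta> \<longrightarrow> j x \<le> \<mu> * z0 / 2))"
lemma d1b: "d1b > 0" "\<And>y. y \<in> Uplus h \<Longrightarrow> norm0s h (fst y) \<le> d1b \<Longrightarrow> j y \<le> \<mu> * z0 / 2"
proof -
  have "\<mu> * z0 / 2 > 0" using mu z0(1) by simp
  then have "\<exists>\<delta>>0. \<forall>x\<in>Uplus h. norm0s h (fst x) \<le> \<delta> \<longrightarrow> j x \<le> \<mu> * z0 / 2" using j_small by blast
  then have ex: "\<exists>\<delta>. \<delta> > 0 \<and> (\<forall>x\<in>Uplus h. norm0s h (fst x) \<le> \<delta> \<longrightarrow> j x \<le> \<mu> * z0 / 2)" by blast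
  have "d1b > 0 \<and> (\<forall>x\<in>Uplus h. norm0s h (fst x) \<le> d1b \<longrightarrow> j x \<le> \<mu> * z0 / 2)"
    unfolding d1b_def by (rule someI_ex[OF ex])
  then show "d1b > 0" "\<And>y. y \<in> Uplus h \<Longrightarrow> norm0s h (fst y) \<le> d1b \<Longrightarrow> j y \<le> \<mu> * z0 / 2" by auto
qed

definition \<tau> where "\<tau> = 2 * Vb / (\<mu> * z0)"
lemma \<tau>: "\<tau> > 0" unfolding \<tau>_def using Vb mu z0(1) by simp
definition \<theta> where "\<theta> = d1b * exp (- Qb * (h + \<tau>))"
lemma \<theta>: "\<theta> > 0" "\<theta> \<le> d1b"
proof -
  show "\<theta> > 0" unfolding \<theta>_def using d1b(1) by simp
  have "exp (- Qb * (h + \<tau>)) \<le> 1" using Qb(1) h \<tau> by simp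
  then have "d1b * exp (- Qb * (h + \<tau>)) \<le> d1b * 1" using d1b(1) by (intro mult_left_mono) auto
  then show "\<theta> \<le> d1b" unfolding \<theta>_def by simp
qed

lemma V_small:
  assumes x: "x \<in> X" and TB: "TB \<ge> 0" "\<forall>s\<ge>TB. V x s \<le> Vb" and a: "a \<ge> TB" and r: "a + h + \<tau> \<le> r"
    and sm: "\<forall>u\<in>{a..r}. W x u \<le> d1b"
  shows "V x r \<le> z0"
proof -
  have a0: "a \<ge> 0" using a TB by simp
  have ah: "0 \<le> a + h" "a + h \<le> r" using a0 h r \<tau> by auto
  have jb: "j (seg (W x) u, seg (V x) u) \<le> \<mu> * z0 / 2" if u: "a + h < u" "u < r" for u
  proof (rule d1b(2)[OF traj_Uplus[OF x]])
    show "0 \<le> u" using u a0 h by simp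
    have "\<forall>s\<in>{-h..0}. \<bar>seg (W x) u s\<bar> \<le> d1b"
    proof
      fix s assume s: "s \<in> {-h..0}"
      have "u + s \<in> {a..r}" using s u by auto
      then have "W x (u+s) \<le> d1b" using sm by blast
      moreover have "W x (u+s) \<ge> 0" using W_nonneg[OF x, of "u+s"] s u a0 by simp
      ultimately show "\<bar>seg (W x) u s\<bar> \<le> d1b" unfolding seg_def by simp
    qed
    from norm0s_le[OF _ this] h show "norm0s h (fst (seg (W x) u, seg (V x) u)) \<le> d1b" by simp
  qed
  define E where "E = exp (-\<mu>*(r-(a+h)))"
  have "V x r \<le> (\<mu> * z0 / 2)/\<mu> + (V x (a+h) - (\<mu> * z0 / 2)/\<mu>) * E"
    unfolding E_def by (rule V_upper_gen[OF x ah]) (use jb in auto)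
  then have A: "V x r \<le> z0/2 + (V x (a+h) - z0/2) * E" using mu by simp
  have vah: "V x (a+h) \<le> Vb" using TB(2) a h by simp
  have "(V x (a+h) - z0/2) * E \<le> Vb * E"
    using vah z0(1) unfolding E_def by (intro mult_right_mono) auto
  moreover note A
  moreover have "Vb * E \<le> z0/2"
  proof -
    have "exp (\<mu>*(r-(a+h))) \<ge> 1 + \<mu>*(r-(a+h))" by (rule exp_ge_add_one_self)
    moreover have "\<mu>*(r-(a+h)) \<ge> \<mu>*\<tau>" using r mu by (intro mult_left_mono) auto
    moreover have "\<mu>*\<tau> = 2*Vb/z0" unfolding \<tau>_def using mu by simp
    ultimately have ge: "exp (\<mu>*(r-(a+h))) \<ge> 2*Vb/z0" by linarith
    have "Vb * E = Vb / exp (\<mu>*(r-(a+h)))" unfolding E_def by (simp add: exp_minus inverse_eq_divide)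
    also have "\<dots> \<le> Vb / (2*Vb/z0)" using Vb z0(1) ge by (intro divide_left_mono) auto
    also have "\<dots> = z0/2" using Vb by simp
    finally show ?thesis .
  qed
  ultimately show ?thesis by linarith
qed

lemma W_reach: assumes x: "x \<in> X" and p: "fst x 0 > 0" and TB: "TB \<ge> 0" "\<forall>s\<ge>TB. V x s \<le> Vb"
  shows "\<exists>t'\<ge>TB. W x t' \<ge> d1b"
proof (rule ccontr)
  assume nex: "\<not> (\<exists>t'\<ge>TB. W x t' \<ge> d1b)"
  have sm: "W x u < d1b" if "u \<ge> TB" for u using nex that by (meson not_le)
  define T2 where "T2 = TB + h + \<tau>"
  have T2TB: "T2 \<ge> TB" "T2 \<ge> 0" unfolding T2_def using TB h \<tau> by auto
  have qa: "q (V x r) \<ge> \<alpha>" if r: "r \<ge> T2" for r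
  proof (rule z0(2))
    show "0 \<le> V x r" using V_nonneg[OF x] r T2TB h by simp
    show "V x r \<le> z0"
      by (rule V_small[OF x TB order.refl]) (use r sm T2TB in \<open>auto simp: T2_def less_imp_le\<close>)
  qed
  define w2 where "w2 = W x T2"
  have w2p: "w2 > 0" unfolding w2_def using W_pos[OF x p] T2TB by simp
  define d where "d = d1b / (\<alpha> * w2)"
  have dp: "d > 0" unfolding d_def using d1b(1) z0(3) w2p by simp
  have "W x (T2 + d) \<ge> w2 * exp (\<alpha> * ((T2 + d) - T2))" unfolding w2_def
    by (rule W_lower[OF x]) (use T2TB dp qa in auto)
  moreover have "exp (\<alpha> * ((T2 + d) - T2)) \<ge> 1 + \<alpha> * d" using exp_ge_add_one_self[of "\<alpha> * d"] by simp
  moreover have "w2 * (1 + \<alpha> * d) = w2 + d1b" unfolding d_def using z0(3) w2p by (simp add: field_simps)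
  ultimately have "W x (T2 + d) \<ge> w2 + d1b" using w2p
    by (metis (no_types, opaque_lifting) mult_left_mono less_imp_le order_trans)
  then have "W x (T2 + d) > d1b" using w2p by simp
  moreover have "W x (T2 + d) < d1b" by (rule sm) (use T2TB dp in simp)
  ultimately show False by simp
qed

lemma W_stay: assumes x: "x \<in> X" and TB: "TB \<ge> 0" "\<forall>s\<ge>TB. V x s \<le> Vb"
  and t': "t' \<ge> TB" "W x t' \<ge> d1b" and s: "s \<ge> t'"
  shows "W x s \<ge> \<theta>"
proof (rule ccontr)
  assume "\<not> W x s \<ge> \<theta>"
  then have ws: "W x s < \<theta>" by simp
  have t'0: "t' \<ge> 0" using t' TB by simp
  have cm: "continuous_on {t'..s} (\<lambda>u. - W x u)" using W_cont_ab[OF x t'0] by (auto intro: continuous_intros)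
  obtain c where c: "t' \<le> c" "c < s" "- W x c = - d1b" "\<forall>r. c < r \<and> r \<le> s \<longrightarrow> - d1b < - W x r"
    using last_time[OF s cm, of "- d1b"] t' ws \<theta>(2) by auto
  have c0: "c \<ge> 0" using c t'0 by simp
  have Wc: "W x c = d1b" using c by simp
  have smallc: "\<forall>u\<in>{c..s}. W x u \<le> d1b"
  proof
    fix u assume "u \<in> {c..s}"
    then have u: "c \<le> u" "u \<le> s" by auto
    show "W x u \<le> d1b"
    proof (cases "u = c")
      case True then show ?thesis using Wc by simp
    next
      case False
      then have "c < u" using u by simp
      then have "- d1b < - W x u" using c(4) u by blast
      then show ?thesis by simp
    qed
  qed
  show False
  proof (cases "s - c < h + \<tau>")
    case True
    have "W x s \<ge> W x c * exp (- Qb * (s - c))" using W_Q(1)[OF x c0, of s] c by simp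
    moreover have "exp (- Qb * (s - c)) \<ge> exp (- Qb * (h + \<tau>))" using True Qb(1) by simp
    moreover have "W x c * exp (- Qb * (s - c)) \<ge> W x c * exp (- Qb * (h + \<tau>))"
      using calculation(2) Wc d1b(1) by (intro mult_left_mono) auto
    ultimately have "W x s \<ge> d1b * exp (- Qb * (h + \<tau>))" unfolding Wc by linarith
    then show False using ws unfolding \<theta>_def by simp
  next
    case False
    define c' where "c' = c + h + \<tau>"
    have c'0: "0 \<le> c'" "c' \<le> s" "c \<le> c'" unfolding c'_def using False c0 h \<tau> by auto
    have qa: "\<forall>r\<in>{c'..s}. q (V x r) \<ge> 0"
    proof
      fix r assume r: "r \<in> {c'..s}"
      have "q (V x r) \<ge> \<alpha>"
      proof (rule z0(2))
        show "0 \<le> V x r" using V_nonneg[OF x] r c'0 h by simp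
        show "V x r \<le> z0"
        proof (rule V_small[OF x TB(1) TB(2), of c r])
          show "TB \<le> c" using c t' by simp
          show "c + h + \<tau> \<le> r" using r unfolding c'_def by simp
          show "\<forall>u\<in>{c..r}. W x u \<le> d1b" using smallc r by auto
        qed
      qed
      then show "q (V x r) \<ge> 0" using z0(3) by simp
    qed
    have "W x s \<ge> W x c' * exp (0 * (s - c'))" by (rule W_lower[OF x c'0(1,2) qa])
    then have "W x s \<ge> W x c'" by simp
    moreover have "W x c' \<ge> W x c * exp (- Qb * (c' - c))" using W_Q(1)[OF x c0 c'0(3)] .
    moreover have "c' - c = h + \<tau>" unfolding c'_def by simp
    ultimately have "W x s \<ge> \<theta>" unfolding \<theta>_def Wc by simp
    then show False using ws by simp
  qed
qed

lemma W_persist: assumes x: "x \<in> X" and p: "fst x 0 > 0"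
  shows "\<exists>T\<ge>0. \<forall>s\<ge>T. W x s \<ge> \<theta> \<and> W x s \<le> Wb \<and> V x s \<le> Vb"
proof -
  obtain TB where TB: "TB \<ge> 0" "\<forall>s\<ge>TB. W x s \<le> Wb \<and> V x s \<le> Vb" using bounds_eventually[OF x] by blast
  have TB2: "\<forall>s\<ge>TB. V x s \<le> Vb" using TB by blast
  obtain t' where t': "t' \<ge> TB" "W x t' \<ge> d1b" using W_reach[OF x p TB(1) TB2] by blast
  have "\<forall>s\<ge>t'. W x s \<ge> \<theta> \<and> W x s \<le> Wb \<and> V x s \<le> Vb"
    using W_stay[OF x TB(1) TB2 t'] TB(2) t'(1) by auto
  then show ?thesis using t' TB by (intro exI[of _ t']) auto
qed

definition T1v where "T1v = Wb / (\<theta> * \<alpha>) + 1"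
definition Vlow where "Vlow = z0 * exp (- \<mu> * T1v)"
lemma Vlow: "Vlow > 0" unfolding Vlow_def using z0(1) by simp

lemma V_persist: assumes x: "x \<in> X" and p: "fst x 0 > 0"
  shows "\<exists>T\<ge>0. \<forall>s\<ge>T. W x s \<ge> \<theta> \<and> V x s \<ge> Vlow"
proof -
  obtain TC where TC: "TC \<ge> 0" "\<forall>s\<ge>TC. W x s \<ge> \<theta> \<and> W x s \<le> Wb \<and> V x s \<le> Vb" using W_persist[OF x p] by blast
  have T1p: "T1v > 0" unfolding T1v_def using Wb(2) \<theta>(1) z0(3) by (simp add: add_pos_nonneg)
  have "V x t \<ge> Vlow" if t: "t \<ge> TC + T1v" for t
  proof -
    have "\<exists>a\<in>{t - T1v..t}. V x a \<ge> z0"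
    proof (rule ccontr)
      assume "\<not> (\<exists>a\<in>{t - T1v..t}. V x a \<ge> z0)"
      then have lo: "\<forall>a\<in>{t - T1v..t}. V x a < z0" by auto
      have qa: "\<forall>a\<in>{t - T1v..t}. q (V x a) \<ge> \<alpha>"
      proof
        fix a assume a: "a \<in> {t - T1v..t}"
        have "V x a < z0" using lo a by blast
        moreover have "V x a \<ge> 0" using V_nonneg[OF x, of a] a TC(1) T1p t h by auto
        ultimately show "q (V x a) \<ge> \<alpha>" using z0(2) by simp
      qed
      have st: "0 \<le> t - T1v" "t - T1v \<le> t" using t TC(1) T1p by auto
      have "W x t \<ge> W x (t - T1v) * exp (\<alpha> * (t - (t - T1v)))" by (rule W_lower[OF x st qa])
      moreover have "exp (\<alpha> * (t - (t - T1v))) \<ge> 1 + \<alpha> * T1v" using exp_ge_add_one_self[of "\<alpha> * T1v"] by simp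
      moreover have "W x (t - T1v) \<ge> \<theta>" using TC(2) t by simp
      moreover have "\<theta> * (1 + \<alpha> * T1v) \<le> W x (t - T1v) * exp (\<alpha> * (t - (t - T1v)))"
        by (rule mult_mono) (use calculation \<theta>(1) z0(3) T1p in \<open>auto simp: add_nonneg_nonneg\<close>)
      ultimately have "W x t \<ge> \<theta> * (1 + \<alpha> * T1v)" by linarith
      moreover have "\<theta> * (1 + \<alpha> * T1v) = \<theta> + Wb + \<theta> * \<alpha>" unfolding T1v_def using \<theta>(1) z0(3) by (simp add: field_simps)
      moreover have "W x t \<le> Wb" using TC(2) t T1p by simp
      moreover have "\<theta> * \<alpha> > 0" using \<theta>(1) z0(3) by simp
      ultimately show False using \<theta>(1) by linarith
    qed
    then obtain a where a: "a \<in> {t - T1v..t}" "V x a \<ge> z0" by blast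
    have a0: "0 \<le> a" using a t TC(1) T1p by auto
    have "V x t \<ge> V x a * exp (-\<mu>*(t-a))" by (rule V_decay[OF x a0]) (use a in auto)
    moreover have "exp (-\<mu>*(t-a)) \<ge> exp (-\<mu>*T1v)" using a mu by simp
    moreover have "z0 * exp (-\<mu>*T1v) \<le> V x a * exp (-\<mu>*(t-a))"
      by (rule mult_mono) (use calculation a(2) z0(1) in auto)
    ultimately have "V x t \<ge> z0 * exp (-\<mu>*T1v)" by linarith
    then show ?thesis unfolding Vlow_def .
  qed
  then show ?thesis using TC T1p by (intro exI[of _ "TC + T1v"]) auto
qed

end

lemma AA_real:
  fixes F :: "nat \<Rightarrow> real \<Rightarrow> real"
  assumes K: "K > 0" and bd: "\<And>n s. s \<in> {-h..0} \<Longrightarrow> \<bar>F n s\<bar> \<le> K"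
    and eq: "\<And>n s s'. s \<in> {-h..0} \<Longrightarrow> s' \<in> {-h..0} \<Longrightarrow> \<bar>F n s - F n s'\<bar> \<le> K * \<bar>s - s'\<bar> + K * (s - s')^2"
  obtains g k where "strict_mono (k :: nat \<Rightarrow> nat)"
    "\<And>e. e > 0 \<Longrightarrow> \<exists>N. \<forall>n\<ge>N. \<forall>s\<in>{-h..0}. \<bar>F (k n) s - g s\<bar> < e"
proof -
  have equi: "\<exists>d>0. \<forall>n y. y \<in> {-h..0} \<and> norm (x - y) < d \<longrightarrow> norm (F n x - F n y) < e"
    if x: "x \<in> {-h..0}" and e: "0 < e" for x e
  proof (intro exI[of _ "min 1 (e/(2*K))"] conjI allI impI)
    show "min 1 (e/(2*K)) > 0" using e K by simp
    fix n y assume y: "y \<in> {-h..0} \<and> norm (x - y) < min 1 (e/(2*K))"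
    have a1: "\<bar>x - y\<bar> < 1" "\<bar>x - y\<bar> < e/(2*K)" using y by auto
    have sq: "(x - y)^2 \<le> \<bar>x - y\<bar>"
    proof -
      have "(x - y)^2 = \<bar>x - y\<bar> * \<bar>x - y\<bar>" by (simp add: power2_eq_square abs_mult_self_eq)
      also have "\<dots> \<le> \<bar>x - y\<bar> * 1" using a1 by (intro mult_left_mono) auto
      finally show ?thesis by simp
    qed
    have "\<bar>F n x - F n y\<bar> \<le> K * \<bar>x - y\<bar> + K * (x - y)^2" using eq x y by blast
    also have "\<dots> \<le> K * \<bar>x - y\<bar> + K * \<bar>x - y\<bar>" using sq K by (intro add_left_mono mult_left_mono) auto
    also have "\<dots> = 2 * K * \<bar>x - y\<bar>" by simp
    also have "\<dots> < 2 * K * (e/(2*K))" using a1 K by (intro mult_strict_left_mono) auto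
    also have "\<dots> = e" using K by simp
    finally show "norm (F n x - F n y) < e" by simp
  qed
  obtain g k where "continuous_on {-h..0} g" "strict_mono (k :: nat \<Rightarrow> nat)"
    "\<And>e. 0 < e \<Longrightarrow> \<exists>N. \<forall>n x. n \<ge> N \<and> x \<in> {-h..0} \<longrightarrow> norm (F (k n) x - g x) < e"
    using Arzela_Ascoli[of "{-h..0}" F K] bd equi by auto
  then show ?thesis using that by (metis real_norm_def)
qed

lemma unif_sub:
  fixes F :: "nat \<Rightarrow> real \<Rightarrow> real"
  assumes "\<And>e. e > 0 \<Longrightarrow> \<exists>N. \<forall>n\<ge>N. \<forall>s\<in>S. \<bar>F n s - g s\<bar> < e" "strict_mono (k :: nat \<Rightarrow> nat)"
  shows "\<And>e. e > 0 \<Longrightarrow> \<exists>N. \<forall>n\<ge>N. \<forall>s\<in>S. \<bar>F (k n) s - g s\<bar> < e"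
proof -
  fix e :: real assume "e > 0"
  then obtain N where N: "\<forall>n\<ge>N. \<forall>s\<in>S. \<bar>F n s - g s\<bar> < e" using assms(1) by blast
  have "\<forall>n\<ge>N. \<forall>s\<in>S. \<bar>F (k n) s - g s\<bar> < e"
  proof (intro allI impI ballI)
    fix n s assume "n \<ge> N" "s \<in> S"
    moreover have "k n \<ge> n" using seq_suble[OF assms(2)] .
    ultimately show "\<bar>F (k n) s - g s\<bar> < e" using N by auto
  qed
  then show "\<exists>N. \<forall>n\<ge>N. \<forall>s\<in>S. \<bar>F (k n) s - g s\<bar> < e" by blast
qed

lemma unif_pointwise:
  fixes F :: "nat \<Rightarrow> real \<Rightarrow> real"
  assumes "\<And>e. e > 0 \<Longrightarrow> \<exists>N. \<forall>n\<ge>N. \<forall>s\<in>S. \<bar>F n s - g s\<bar> < e" "s \<in> S"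
  shows "(\<lambda>n. F n s) \<longlonglongrightarrow> g s"
proof (rule LIMSEQ_I)
  fix r :: real assume "r > 0"
  then obtain N where "\<forall>n\<ge>N. \<forall>s\<in>S. \<bar>F n s - g s\<bar> < r" using assms(1) by blast
  then show "\<exists>N. \<forall>n\<ge>N. norm (F n s - g s) < r" using assms(2) by auto
qed

lemma limit_le:
  fixes f :: "nat \<Rightarrow> real"
  assumes "f \<longlonglongrightarrow> a" "\<And>n. f n \<le> c" shows "a \<le> c"
  using assms by (intro tendsto_le[OF trivial_limit_sequentially tendsto_const]) auto

lemma limit_ge:
  fixes f :: "nat \<Rightarrow> real"
  assumes "f \<longlonglongrightarrow> a" "\<And>n. f n \<ge> c" shows "a \<ge> c"
  using assms by (intro tendsto_le[OF trivial_limit_sequentially _ tendsto_const]) auto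

lemma deriv_from_taylor:
  fixes g :: "real \<Rightarrow> real" and g' :: real
  assumes "\<And>s. s \<in> S \<Longrightarrow> \<bar>g s - g x - g' * (s - x)\<bar> \<le> K * (s - x)^2" "K \<ge> 0"
  shows "(g has_real_derivative g') (at x within S)"
  unfolding has_field_derivative_iff Lim_within
proof (intro allI impI)
  fix e :: real assume e: "e > 0"
  show "\<exists>d>0. \<forall>s\<in>S. 0 < dist s x \<and> dist s x < d \<longrightarrow> dist ((g s - g x) / (s - x)) g' < e"
  proof (intro exI[of _ "e/(K+1)"] conjI ballI impI)
    show "e/(K+1) > 0" using e assms(2) by simp
    fix s assume s: "s \<in> S" and d: "0 < dist s x \<and> dist s x < e/(K+1)"
    have nz: "s - x \<noteq> 0" using d by simp
    have ap: "\<bar>s - x\<bar> > 0" using nz by simp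
    have "(g s - g x) / (s - x) - g' = (g s - g x - g' * (s - x)) / (s - x)" using nz by (simp add: field_simps)
    then have "dist ((g s - g x) / (s - x)) g' = \<bar>g s - g x - g' * (s - x)\<bar> / \<bar>s - x\<bar>"
      by (simp add: dist_real_def abs_divide)
    also have "\<dots> \<le> K * (s - x)^2 / \<bar>s - x\<bar>" using assms(1)[OF s] ap by (simp add: divide_right_mono)
    also have "K * (s - x)^2 / \<bar>s - x\<bar> = K * \<bar>s - x\<bar>"
    proof -
      show ?thesis using nz by (auto simp: abs_if field_simps power2_eq_square)
    qed
    also have "\<dots> \<le> K * (e/(K+1))" using d assms(2) by (intro mult_left_mono) (auto simp: dist_real_def)
    also have "\<dots> < e" using e assms(2) by (simp add: field_simps)
    finally show "dist ((g s - g x) / (s - x)) g' < e" .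
  qed
qed

lemma taylor_lip:
  fixes f f' :: "real \<Rightarrow> real"
  assumes d: "\<And>u. u \<in> {a..b} \<Longrightarrow> (f has_real_derivative f' u) (at u)"
    and L: "\<And>u u'. u \<in> {a..b} \<Longrightarrow> u' \<in> {a..b} \<Longrightarrow> \<bar>f' u - f' u'\<bar> \<le> L * \<bar>u - u'\<bar>"
    and u: "u \<in> {a..b}" "u' \<in> {a..b}"
  shows "\<bar>f u - f u' - f' u' * (u - u')\<bar> \<le> L * (u - u')^2"
proof -
  have L0: "L \<ge> 0" if "u \<noteq> u'"
  proof -
    have "0 \<le> L * \<bar>u - u'\<bar>" using L[OF u(1) u(2)] by linarith
    moreover have "\<bar>u - u'\<bar> > 0" using that by simp
    ultimately show ?thesis by (simp add: zero_le_mult_iff)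
  qed
  consider "u = u'" | "u' < u" | "u < u'" by linarith
  then show ?thesis
  proof cases
    case 1 then show ?thesis by simp
  next
    case 2
    obtain z where z: "u' < z" "z < u" "f u - f u' = (u - u') * f' z"
      using MVT2[OF 2, of f f'] d u by (metis atLeastAtMost_iff order_trans less_imp_le)
    have zab: "z \<in> {a..b}" using z u by auto
    have "f u - f u' - f' u' * (u - u') = (u - u') * (f' z - f' u')" using z(3) by (simp add: algebra_simps)
    then have "\<bar>f u - f u' - f' u' * (u - u')\<bar> = \<bar>u - u'\<bar> * \<bar>f' z - f' u'\<bar>" by (simp add: abs_mult)
    also have "\<dots> \<le> \<bar>u - u'\<bar> * (L * \<bar>z - u'\<bar>)" using L[OF zab u(2)] by (intro mult_left_mono) auto
    also have "\<dots> \<le> \<bar>u - u'\<bar> * (L * \<bar>u - u'\<bar>)" using z L0 2 by (intro mult_left_mono) auto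
    also have "\<dots> = L * (\<bar>u - u'\<bar> * \<bar>u - u'\<bar>)" by (simp add: algebra_simps abs_minus_commute)
    also have "\<bar>u - u'\<bar> * \<bar>u - u'\<bar> = (u - u')^2" by (simp add: power2_eq_square abs_mult_self_eq)
    finally show ?thesis by simp
  next
    case 3
    obtain z where z: "u < z" "z < u'" "f u' - f u = (u' - u) * f' z"
      using MVT2[OF 3, of f f'] d u by (metis atLeastAtMost_iff order_trans less_imp_le)
    have zab: "z \<in> {a..b}" using z u by auto
    have "f u - f u' - f' u' * (u - u') = (u' - u) * (f' u' - f' z)" using z(3) by (simp add: algebra_simps)
    then have "\<bar>f u - f u' - f' u' * (u - u')\<bar> = \<bar>u' - u\<bar> * \<bar>f' z - f' u'\<bar>" by (simp add: abs_mult abs_minus_commute)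
    also have "\<dots> \<le> \<bar>u' - u\<bar> * (L * \<bar>z - u'\<bar>)" using L[OF zab u(2)] by (intro mult_left_mono) auto
    also have "\<dots> \<le> \<bar>u' - u\<bar> * (L * \<bar>u - u'\<bar>)" using z L0 3 by (intro mult_left_mono) auto
    also have "\<dots> = L * (\<bar>u - u'\<bar> * \<bar>u - u'\<bar>)" by (simp add: algebra_simps abs_minus_commute)
    also have "\<bar>u - u'\<bar> * \<bar>u - u'\<bar> = (u - u')^2" by (simp add: power2_eq_square abs_mult_self_eq)
    finally show ?thesis by simp
  qed
qed

lemma lip_from_deriv:
  fixes f f' :: "real \<Rightarrow> real"
  assumes d: "\<And>u. u \<in> {a..b} \<Longrightarrow> (f has_real_derivative f' u) (at u)"
    and M: "\<And>u. u \<in> {a..b} \<Longrightarrow> \<bar>f' u\<bar> \<le> M"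
    and u: "u \<in> {a..b}" "u' \<in> {a..b}"
  shows "\<bar>f u - f u'\<bar> \<le> M * \<bar>u - u'\<bar>"
proof -
  consider "u = u'" | "u' < u" | "u < u'" by linarith
  then show ?thesis
  proof cases
    case 1 then show ?thesis by simp
  next
    case 2
    obtain z where z: "u' < z" "z < u" "f u - f u' = (u - u') * f' z"
      using MVT2[OF 2, of f f'] d u by (metis atLeastAtMost_iff order_trans less_imp_le)
    have zab: "z \<in> {a..b}" using z u by auto
    have "f u - f u' = (u - u') * f' z" using z(3) by simp
    then have "\<bar>f u - f u'\<bar> = \<bar>u - u'\<bar> * \<bar>f' z\<bar>" by (simp add: abs_mult)
    also have "\<dots> \<le> \<bar>u - u'\<bar> * M" using M[OF zab] by (intro mult_left_mono) auto
    finally show ?thesis by (simp add: mult.commute)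
  next
    case 3
    obtain z where z: "u < z" "z < u'" "f u' - f u = (u' - u) * f' z"
      using MVT2[OF 3, of f f'] d u by (metis atLeastAtMost_iff order_trans less_imp_le)
    have zab: "z \<in> {a..b}" using z u by auto
    have "f u - f u' = - ((u' - u) * f' z)" using z(3) by simp
    then have "\<bar>f u - f u'\<bar> = \<bar>u' - u\<bar> * \<bar>f' z\<bar>" by (simp only: abs_minus_cancel abs_mult)
    also have "\<dots> \<le> \<bar>u' - u\<bar> * M" using M[OF zab] by (intro mult_left_mono) auto
    finally show ?thesis by (simp add: mult.commute abs_minus_commute)
  qed
qed

lemma smono_comp: "strict_mono (k1::nat\<Rightarrow>nat) \<Longrightarrow> strict_mono k2 \<Longrightarrow> strict_mono (\<lambda>n. k1 (k2 n))"
  unfolding strict_mono_def by blast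

lemma lip_cont: fixes g :: "real \<Rightarrow> real"
  assumes "\<And>s s'. s \<in> S \<Longrightarrow> s' \<in> S \<Longrightarrow> \<bar>g s - g s'\<bar> \<le> K * \<bar>s - s'\<bar>" "K \<ge> 0"
  shows "continuous_on S g"
  unfolding continuous_on_iff
proof (intro ballI allI impI)
  fix x e assume x: "x \<in> S" and e: "(e::real) > 0"
  show "\<exists>d>0. \<forall>x'\<in>S. dist x' x < d \<longrightarrow> dist (g x') (g x) < e"
  proof (intro exI[of _ "e/(K+1)"] conjI ballI impI)
    show "e/(K+1) > 0" using e assms(2) by simp
    fix x' assume x': "x' \<in> S" "dist x' x < e/(K+1)"
    have "\<bar>g x' - g x\<bar> \<le> K * \<bar>x' - x\<bar>" using assms(1)[OF x'(1) x] .
    also have "\<dots> \<le> K * (e/(K+1))" using x'(2) assms(2) by (intro mult_left_mono) (auto simp: dist_real_def)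
    also have "\<dots> < e" using e assms(2) by (simp add: field_simps)
    finally show "dist (g x') (g x) < e" by (simp add: dist_real_def)
  qed
qed

context ctx begin

definition good where "good K f \<longleftrightarrow> C1s h f \<and>
   (\<forall>s\<in>{-h..0}. 0 \<le> f s \<and> f s \<le> K \<and> \<bar>der h f s\<bar> \<le> K) \<and>
   (\<forall>s\<in>{-h..0}. \<forall>s'\<in>{-h..0}. \<bar>der h f s - der h f s'\<bar> \<le> K * \<bar>s - s'\<bar> \<and>
        \<bar>f s - f s' - der h f s' * (s - s')\<bar> \<le> K * (s - s')^2)"

definition Bset where "Bset K = {y \<in> X. good K (fst y) \<and> good K (snd y)}"

lemma good_eq: assumes "good K f" "s \<in> {-h..0}" "s' \<in> {-h..0}"
  shows "\<bar>f s - f s'\<bar> \<le> K * \<bar>s - s'\<bar> + K * (s - s')^2"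
proof -
  have a: "\<bar>f s - f s' - der h f s' * (s - s')\<bar> \<le> K * (s - s')^2" using assms unfolding good_def by blast
  have b: "\<bar>der h f s'\<bar> \<le> K" using assms unfolding good_def by blast
  have "\<bar>der h f s' * (s - s')\<bar> \<le> K * \<bar>s - s'\<bar>" unfolding abs_mult using b by (intro mult_right_mono) auto
  then show ?thesis using a by linarith
qed

lemma good_norm1: assumes "good K (fst y)" "good K (snd y)" shows "norm1 h y \<le> 2 * K"
proof -
  have b: "\<forall>s\<in>{-h..0}. \<bar>fst y s\<bar> \<le> K" "\<forall>s\<in>{-h..0}. \<bar>snd y s\<bar> \<le> K"
    "\<forall>s\<in>{-h..0}. \<bar>der h (fst y) s\<bar> \<le> K" "\<forall>s\<in>{-h..0}. \<bar>der h (snd y) s\<bar> \<le> K"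
    using assms unfolding good_def by auto
  have "norm0 h y \<le> K" unfolding norm0_def using norm0s_le[OF _ b(1)] norm0s_le[OF _ b(2)] h by simp
  moreover have "norm0 h (der h (fst y), der h (snd y)) \<le> K"
    unfolding norm0_def using norm0s_le[OF _ b(3)] norm0s_le[OF _ b(4)] h by simp
  ultimately show ?thesis unfolding norm1_def by simp
qed

lemma limit_good:
  fixes F :: "nat \<Rightarrow> real \<Rightarrow> real" and g g' :: "real \<Rightarrow> real"
  assumes gd: "\<And>n. good K (F n)"
    and u1: "\<And>e. e > 0 \<Longrightarrow> \<exists>N. \<forall>n\<ge>N. \<forall>s\<in>{-h..0}. \<bar>F n s - g s\<bar> < e"
    and u2: "\<And>e. e > 0 \<Longrightarrow> \<exists>N. \<forall>n\<ge>N. \<forall>s\<in>{-h..0}. \<bar>der h (F n) s - g' s\<bar> < e"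
  shows "good K g" "\<forall>s\<in>{-h..0}. der h g s = g' s"
proof -
  have p1: "(\<lambda>n. F n s) \<longlonglongrightarrow> g s" if "s \<in> {-h..0}" for s by (rule unif_pointwise[OF u1 that])
  have p2: "(\<lambda>n. der h (F n) s) \<longlonglongrightarrow> g' s" if "s \<in> {-h..0}" for s by (rule unif_pointwise[OF u2 that])
  have K0: "K \<ge> 0" using gd[of 0] h unfolding good_def by force
  have bnd: "0 \<le> g s \<and> g s \<le> K \<and> \<bar>g' s\<bar> \<le> K" if s: "s \<in> {-h..0}" for s
  proof (intro conjI)
    show "0 \<le> g s" by (rule limit_ge[OF p1[OF s]]) (use gd s in \<open>auto simp: good_def\<close>)
    show "g s \<le> K" by (rule limit_le[OF p1[OF s]]) (use gd s in \<open>auto simp: good_def\<close>)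
    have "(\<lambda>n. \<bar>der h (F n) s\<bar>) \<longlonglongrightarrow> \<bar>g' s\<bar>" by (intro tendsto_intros p2[OF s])
    then show "\<bar>g' s\<bar> \<le> K" by (rule limit_le) (use gd s in \<open>auto simp: good_def\<close>)
  qed
  have lip: "\<bar>g' s - g' s'\<bar> \<le> K * \<bar>s - s'\<bar>" if s: "s \<in> {-h..0}" "s' \<in> {-h..0}" for s s'
  proof -
    have "(\<lambda>n. \<bar>der h (F n) s - der h (F n) s'\<bar>) \<longlonglongrightarrow> \<bar>g' s - g' s'\<bar>" by (intro tendsto_intros p2 s)
    then show ?thesis by (rule limit_le) (use gd s in \<open>auto simp: good_def\<close>)
  qed
  have tay: "\<bar>g s - g s' - g' s' * (s - s')\<bar> \<le> K * (s - s')^2" if s: "s \<in> {-h..0}" "s' \<in> {-h..0}" for s s'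
  proof -
    have "(\<lambda>n. \<bar>F n s - F n s' - der h (F n) s' * (s - s')\<bar>) \<longlonglongrightarrow> \<bar>g s - g s' - g' s' * (s - s')\<bar>"
      by (intro tendsto_intros p1 p2 s)
    then show ?thesis by (rule limit_le) (use gd s in \<open>auto simp: good_def\<close>)
  qed
  have D: "(g has_real_derivative g' s') (at s' within {-h..0})" if s': "s' \<in> {-h..0}" for s'
    by (rule deriv_from_taylor[OF _ K0]) (use tay s' in auto)
  show dg: "\<forall>s\<in>{-h..0}. der h g s = g' s" using D der_eq[OF h] by blast
  have cg: "continuous_on {-h..0} g'" by (rule lip_cont[OF _ K0]) (use lip in auto)
  have "C1s h g" unfolding C1s_def using D cg by blast
  then show "good K g" unfolding good_def using bnd lip tay dg by simp
qed

end

context ctx begin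

lemma j_lip_good: "\<exists>L\<ge>0. \<forall>y\<in>{y. y \<in> Uplus h \<and> good K (fst y) \<and> good K (snd y)}.
   \<forall>y'\<in>{y. y \<in> Uplus h \<and> good K (fst y) \<and> good K (snd y)}. \<bar>j y - j y'\<bar> \<le> L * norm0 h (psub y y')"
proof -
  have bnd: "bounded1 h {y. y \<in> Uplus h \<and> good K (fst y) \<and> good K (snd y)}"
    unfolding bounded1_def by (intro exI[of _ "2*K"]) (auto intro: good_norm1)
  have sub: "{y. y \<in> Uplus h \<and> good K (fst y) \<and> good K (snd y)} \<subseteq> Uplus h" by auto
  show ?thesis by (rule j_lip[rule_format, OF conjI[OF sub bnd]])
qed

lemma q_isCont: "z > Rm \<Longrightarrow> isCont q z"
  using q_cont continuous_on_eq_continuous_at[of "{Rm<..}" q] by auto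

lemma X_cond: assumes "y \<in> X"
  shows "der h (fst y) 0 = q (snd y 0) * fst y 0" "der h (snd y) 0 = j y - \<mu> * snd y 0"
  using assms unfolding Xplus_def Fmap_def by auto

lemma good_lip_der: "good K f \<Longrightarrow> s \<in> {-h..0} \<Longrightarrow> s' \<in> {-h..0} \<Longrightarrow>
    \<bar>der h f s - der h f s'\<bar> \<le> K * \<bar>s - s'\<bar> + K * (s - s')^2"
proof -
  assume a: "good K f" "s \<in> {-h..0}" "s' \<in> {-h..0}"
  have K0: "K \<ge> 0" using a unfolding good_def by force
  have "\<bar>der h f s - der h f s'\<bar> \<le> K * \<bar>s - s'\<bar>" using a unfolding good_def by blast
  moreover have "K * (s - s')^2 \<ge> 0" using K0 by simp
  ultimately show ?thesis by linarith
qed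

lemma good_abs: "good K f \<Longrightarrow> s \<in> {-h..0} \<Longrightarrow> \<bar>f s\<bar> \<le> K \<and> \<bar>der h f s\<bar> \<le> K"
  unfolding good_def by auto

lemma compact_B: assumes K: "K > 0" shows "compact1 h (Bset K)"
  unfolding compact1_def
proof (intro allI impI)
  fix f :: "nat \<Rightarrow> st" assume fB: "\<forall>n. f n \<in> Bset K"
  have gf1: "good K (fst (f n))" and gf2: "good K (snd (f n))" and fX: "f n \<in> X" for n
    using fB unfolding Bset_def by auto
  obtain k1 :: "nat \<Rightarrow> nat" and g1 :: "real \<Rightarrow> real" where k1: "strict_mono k1" and u1: "\<And>e. e > 0 \<Longrightarrow> \<exists>N. \<forall>n\<ge>N. \<forall>s\<in>{-h..0}. \<bar>fst (f (k1 n)) s - g1 s\<bar> < e"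
  proof (rule AA_real[OF K, of h "\<lambda>n. fst (f n)"])
    fix n s assume "s \<in> {-h..0}" then show "\<bar>(\<lambda>n. fst (f n)) n s\<bar> \<le> K" using good_abs[OF gf1] by simp
  next
    fix n s s' assume "s \<in> {-h..0}" "s' \<in> {-h..0}"
    then show "\<bar>(\<lambda>n. fst (f n)) n s - (\<lambda>n. fst (f n)) n s'\<bar> \<le> K * \<bar>s - s'\<bar> + K * (s - s')^2" using good_eq[OF gf1] by simp
  next
    fix k g assume a: "strict_mono (k :: nat \<Rightarrow> nat)" and b: "\<And>e. e > 0 \<Longrightarrow> \<exists>N. \<forall>n\<ge>N. \<forall>s\<in>{-h..0}. \<bar>(\<lambda>n. fst (f n)) (k n) s - g s\<bar> < e"
    show thesis by (rule that[OF a b])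
  qed
  obtain k2 :: "nat \<Rightarrow> nat" and g2 :: "real \<Rightarrow> real" where k2: "strict_mono k2" and u2: "\<And>e. e > 0 \<Longrightarrow> \<exists>N. \<forall>n\<ge>N. \<forall>s\<in>{-h..0}. \<bar>snd (f (k1 (k2 n))) s - g2 s\<bar> < e"
  proof (rule AA_real[OF K, of h "\<lambda>n. snd (f (k1 n))"])
    fix n s assume "s \<in> {-h..0}" then show "\<bar>(\<lambda>n. snd (f (k1 n))) n s\<bar> \<le> K" using good_abs[OF gf2] by simp
  next
    fix n s s' assume "s \<in> {-h..0}" "s' \<in> {-h..0}"
    then show "\<bar>(\<lambda>n. snd (f (k1 n))) n s - (\<lambda>n. snd (f (k1 n))) n s'\<bar> \<le> K * \<bar>s - s'\<bar> + K * (s - s')^2" using good_eq[OF gf2] by simp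
  next
    fix k g assume a: "strict_mono (k :: nat \<Rightarrow> nat)" and b: "\<And>e. e > 0 \<Longrightarrow> \<exists>N. \<forall>n\<ge>N. \<forall>s\<in>{-h..0}. \<bar>(\<lambda>n. snd (f (k1 n))) (k n) s - g s\<bar> < e"
    show thesis by (rule that[OF a b])
  qed
  obtain k3 :: "nat \<Rightarrow> nat" and g3 :: "real \<Rightarrow> real" where k3: "strict_mono k3" and u3: "\<And>e. e > 0 \<Longrightarrow> \<exists>N. \<forall>n\<ge>N. \<forall>s\<in>{-h..0}. \<bar>der h (fst (f (k1 (k2 (k3 n))))) s - g3 s\<bar> < e"
  proof (rule AA_real[OF K, of h "\<lambda>n. der h (fst (f (k1 (k2 n))))"])
    fix n s assume "s \<in> {-h..0}" then show "\<bar>(\<lambda>n. der h (fst (f (k1 (k2 n))))) n s\<bar> \<le> K" using good_abs[OF gf1] by simp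
  next
    fix n s s' assume "s \<in> {-h..0}" "s' \<in> {-h..0}"
    then show "\<bar>(\<lambda>n. der h (fst (f (k1 (k2 n))))) n s - (\<lambda>n. der h (fst (f (k1 (k2 n))))) n s'\<bar> \<le> K * \<bar>s - s'\<bar> + K * (s - s')^2" using good_lip_der[OF gf1] by simp
  next
    fix k g assume a: "strict_mono (k :: nat \<Rightarrow> nat)" and b: "\<And>e. e > 0 \<Longrightarrow> \<exists>N. \<forall>n\<ge>N. \<forall>s\<in>{-h..0}. \<bar>(\<lambda>n. der h (fst (f (k1 (k2 n))))) (k n) s - g s\<bar> < e"
    show thesis by (rule that[OF a b])
  qed
  obtain k4 :: "nat \<Rightarrow> nat" and g4 :: "real \<Rightarrow> real" where k4: "strict_mono k4" and u4: "\<And>e. e > 0 \<Longrightarrow> \<exists>N. \<forall>n\<ge>N. \<forall>s\<in>{-h..0}. \<bar>der h (snd (f (k1 (k2 (k3 (k4 n)))))) s - g4 s\<bar> < e"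
  proof (rule AA_real[OF K, of h "\<lambda>n. der h (snd (f (k1 (k2 (k3 n)))))"])
    fix n s assume "s \<in> {-h..0}" then show "\<bar>(\<lambda>n. der h (snd (f (k1 (k2 (k3 n)))))) n s\<bar> \<le> K" using good_abs[OF gf2] by simp
  next
    fix n s s' assume "s \<in> {-h..0}" "s' \<in> {-h..0}"
    then show "\<bar>(\<lambda>n. der h (snd (f (k1 (k2 (k3 n)))))) n s - (\<lambda>n. der h (snd (f (k1 (k2 (k3 n)))))) n s'\<bar> \<le> K * \<bar>s - s'\<bar> + K * (s - s')^2" using good_lip_der[OF gf2] by simp
  next
    fix k g assume a: "strict_mono (k :: nat \<Rightarrow> nat)" and b: "\<And>e. e > 0 \<Longrightarrow> \<exists>N. \<forall>n\<ge>N. \<forall>s\<in>{-h..0}. \<bar>(\<lambda>n. der h (snd (f (k1 (k2 (k3 n)))))) (k n) s - g s\<bar> < e"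
    show thesis by (rule that[OF a b])
  qed
  define r where "r n = k1 (k2 (k3 (k4 n)))" for n :: nat
  have r: "strict_mono r" unfolding r_def by (rule smono_comp[OF k1 smono_comp[OF k2 smono_comp[OF k3 k4]]])
  have U1: "\<And>e. e > 0 \<Longrightarrow> \<exists>N. \<forall>n\<ge>N. \<forall>s\<in>{-h..0}. \<bar>fst (f (r n)) s - g1 s\<bar> < e"
    unfolding r_def using unif_sub[OF u1 smono_comp[OF k2 smono_comp[OF k3 k4]]] by simp
  have U2: "\<And>e. e > 0 \<Longrightarrow> \<exists>N. \<forall>n\<ge>N. \<forall>s\<in>{-h..0}. \<bar>snd (f (r n)) s - g2 s\<bar> < e"
    unfolding r_def using unif_sub[OF u2 smono_comp[OF k3 k4]] by simp
  have U3: "\<And>e. e > 0 \<Longrightarrow> \<exists>N. \<forall>n\<ge>N. \<forall>s\<in>{-h..0}. \<bar>der h (fst (f (r n))) s - g3 s\<bar> < e"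
    unfolding r_def using unif_sub[OF u3 k4] by simp
  have U4: "\<And>e. e > 0 \<Longrightarrow> \<exists>N. \<forall>n\<ge>N. \<forall>s\<in>{-h..0}. \<bar>der h (snd (f (r n))) s - g4 s\<bar> < e"
    unfolding r_def using u4 by simp
  have lg1: "good K g1" "\<forall>s\<in>{-h..0}. der h g1 s = g3 s"
    using limit_good[of K "\<lambda>n. fst (f (r n))" g1 g3] gf1 U1 U3 by auto
  have lg2: "good K g2" "\<forall>s\<in>{-h..0}. der h g2 s = g4 s"
    using limit_good[of K "\<lambda>n. snd (f (r n))" g2 g4] gf2 U2 U4 by auto
  define l where "l = (g1, g2)"
  have h0: "(0::real) \<in> {-h..0}" using h by simp
  have lU: "l \<in> Uplus h" unfolding Uplus_def l_def using lg1(1) lg2(1) unfolding good_def by auto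
  obtain Lj where Lj: "Lj \<ge> 0" "\<forall>y\<in>{y. y \<in> Uplus h \<and> good K (fst y) \<and> good K (snd y)}.
     \<forall>y'\<in>{y. y \<in> Uplus h \<and> good K (fst y) \<and> good K (snd y)}. \<bar>j y - j y'\<bar> \<le> Lj * norm0 h (psub y y')"
    using j_lip_good[of K] by blast
  have n0: "norm0 h (psub (f (r n)) l) \<le> e" if "\<forall>s\<in>{-h..0}. \<bar>fst (f (r n)) s - g1 s\<bar> < e"
    "\<forall>s\<in>{-h..0}. \<bar>snd (f (r n)) s - g2 s\<bar> < e" for n e
  proof -
    have "\<forall>s\<in>{-h..0}. \<bar>fst (f (r n)) s - g1 s\<bar> \<le> e" "\<forall>s\<in>{-h..0}. \<bar>snd (f (r n)) s - g2 s\<bar> \<le> e"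
      using that by (auto simp: less_imp_le)
    then show ?thesis unfolding norm0_def psub_def l_def using norm0s_le[of h] h by simp
  qed
  have jconv: "(\<lambda>n. j (f (r n))) \<longlonglongrightarrow> j l"
  proof (rule LIMSEQ_I)
    fix e :: real assume e: "e > 0"
    define e' where "e' = e / (Lj + 1)"
    have e': "e' > 0" unfolding e'_def using e Lj(1) by simp
    obtain N1 where N1: "\<forall>n\<ge>N1. \<forall>s\<in>{-h..0}. \<bar>fst (f (r n)) s - g1 s\<bar> < e'" using U1[OF e'] by blast
    obtain N2 where N2: "\<forall>n\<ge>N2. \<forall>s\<in>{-h..0}. \<bar>snd (f (r n)) s - g2 s\<bar> < e'" using U2[OF e'] by blast
    have "\<forall>n\<ge>max N1 N2. norm (j (f (r n)) - j l) < e"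
    proof (intro allI impI)
      fix n assume n: "n \<ge> max N1 N2"
      have mem: "f (r n) \<in> {y. y \<in> Uplus h \<and> good K (fst y) \<and> good K (snd y)}"
        using gf1 gf2 X_Uplus[OF fX] by auto
      have meml: "l \<in> {y. y \<in> Uplus h \<and> good K (fst y) \<and> good K (snd y)}"
        using lU lg1 lg2 unfolding l_def by auto
      have "\<bar>j (f (r n)) - j l\<bar> \<le> Lj * norm0 h (psub (f (r n)) l)" using Lj(2) mem meml by blast
      also have "\<dots> \<le> Lj * e'" using n0[of n e'] N1 N2 n Lj(1) by (intro mult_left_mono) auto
      also have "\<dots> < e" unfolding e'_def using e Lj(1) by (simp add: field_simps)
      finally show "norm (j (f (r n)) - j l) < e" by simp
    qed
    then show "\<exists>N. \<forall>n\<ge>N. norm (j (f (r n)) - j l) < e" by blast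
  qed
  have pw1: "(\<lambda>n. fst (f (r n)) 0) \<longlonglongrightarrow> g1 0" by (rule unif_pointwise[OF U1 h0])
  have pw2: "(\<lambda>n. snd (f (r n)) 0) \<longlonglongrightarrow> g2 0" by (rule unif_pointwise[OF U2 h0])
  have pw3: "(\<lambda>n. der h (fst (f (r n))) 0) \<longlonglongrightarrow> g3 0" by (rule unif_pointwise[OF U3 h0])
  have pw4: "(\<lambda>n. der h (snd (f (r n))) 0) \<longlonglongrightarrow> g4 0" by (rule unif_pointwise[OF U4 h0])
  have "g2 0 \<ge> 0" using lg2(1) h0 unfolding good_def by blast
  then have g20: "g2 0 > Rm" using Rm by simp
  have "(\<lambda>n. q (snd (f (r n)) 0) * fst (f (r n)) 0) \<longlonglongrightarrow> q (g2 0) * g1 0"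
    by (intro tendsto_mult isCont_tendsto_compose[OF q_isCont[OF g20] pw2] pw1)
  moreover have "(\<lambda>n. q (snd (f (r n)) 0) * fst (f (r n)) 0) = (\<lambda>n. der h (fst (f (r n))) 0)"
    using X_cond(1)[OF fX] by simp
  ultimately have "(\<lambda>n. der h (fst (f (r n))) 0) \<longlonglongrightarrow> q (g2 0) * g1 0" by simp
  from LIMSEQ_unique[OF pw3 this] have c1: "g3 0 = q (g2 0) * g1 0" .
  have "(\<lambda>n. j (f (r n)) - \<mu> * snd (f (r n)) 0) \<longlonglongrightarrow> j l - \<mu> * g2 0"
    by (intro tendsto_intros jconv pw2)
  moreover have "(\<lambda>n. j (f (r n)) - \<mu> * snd (f (r n)) 0) = (\<lambda>n. der h (snd (f (r n))) 0)"
    using X_cond(2)[OF fX] by simp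
  ultimately have "(\<lambda>n. der h (snd (f (r n))) 0) \<longlonglongrightarrow> j l - \<mu> * g2 0" by simp
  from LIMSEQ_unique[OF pw4 this] have c2: "g4 0 = j l - \<mu> * g2 0" .
  have lX: "l \<in> X" unfolding Xplus_def Fmap_def using lU c1 c2 lg1(2) lg2(2) h0 unfolding l_def by simp
  have lB: "l \<in> Bset K" unfolding Bset_def using lX lg1 lg2 unfolding l_def by simp
  have dconv: "(\<lambda>n. d1 h (f (r n)) l) \<longlonglongrightarrow> 0"
  proof (rule LIMSEQ_I)
    fix e :: real assume e: "e > 0"
    define e' where "e' = e / 4"
    have e': "e' > 0" unfolding e'_def using e by simp
    obtain N1 where N1: "\<forall>n\<ge>N1. \<forall>s\<in>{-h..0}. \<bar>fst (f (r n)) s - g1 s\<bar> < e'" using U1[OF e'] by blast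
    obtain N2 where N2: "\<forall>n\<ge>N2. \<forall>s\<in>{-h..0}. \<bar>snd (f (r n)) s - g2 s\<bar> < e'" using U2[OF e'] by blast
    obtain N3 where N3: "\<forall>n\<ge>N3. \<forall>s\<in>{-h..0}. \<bar>der h (fst (f (r n))) s - g3 s\<bar> < e'" using U3[OF e'] by blast
    obtain N4 where N4: "\<forall>n\<ge>N4. \<forall>s\<in>{-h..0}. \<bar>der h (snd (f (r n))) s - g4 s\<bar> < e'" using U4[OF e'] by blast
    have "\<forall>n\<ge>max (max N1 N2) (max N3 N4). norm (d1 h (f (r n)) l - 0) < e"
    proof (intro allI impI)
      fix n assume n: "n \<ge> max (max N1 N2) (max N3 N4)"
      have C: "C1s h (fst (f (r n)))" "C1s h (snd (f (r n)))" "C1s h g1" "C1s h g2"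
        using gf1 gf2 lg1(1) lg2(1) unfolding good_def by auto
      have a: "\<forall>s\<in>{-h..0}. \<bar>fst (f (r n)) s - g1 s\<bar> \<le> e'" "\<forall>s\<in>{-h..0}. \<bar>snd (f (r n)) s - g2 s\<bar> \<le> e'"
        using N1 N2 n by (auto simp: less_imp_le)
      have b: "\<forall>s\<in>{-h..0}. \<bar>der h (\<lambda>s. fst (f (r n)) s - g1 s) s\<bar> \<le> e'"
      proof
        fix s assume s: "s \<in> {-h..0}"
        have "der h (\<lambda>s. fst (f (r n)) s - g1 s) s = der h (fst (f (r n))) s - g3 s"
          using der_diff[OF h C(1) C(3) s] lg1(2) s by simp
        then show "\<bar>der h (\<lambda>s. fst (f (r n)) s - g1 s) s\<bar> \<le> e'" using N3 n s by (auto simp: less_imp_le)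
      qed
      have c: "\<forall>s\<in>{-h..0}. \<bar>der h (\<lambda>s. snd (f (r n)) s - g2 s) s\<bar> \<le> e'"
      proof
        fix s assume s: "s \<in> {-h..0}"
        have "der h (\<lambda>s. snd (f (r n)) s - g2 s) s = der h (snd (f (r n))) s - g4 s"
          using der_diff[OF h C(2) C(4) s] lg2(2) s by simp
        then show "\<bar>der h (\<lambda>s. snd (f (r n)) s - g2 s) s\<bar> \<le> e'" using N4 n s by (auto simp: less_imp_le)
      qed
      have P: "psub (f (r n)) l = ((\<lambda>s. fst (f (r n)) s - g1 s), (\<lambda>s. snd (f (r n)) s - g2 s))"
        unfolding psub_def l_def by simp
      have d1eq: "d1 h (f (r n)) l = max (norm0s h (\<lambda>s. fst (f (r n)) s - g1 s)) (norm0s h (\<lambda>s. snd (f (r n)) s - g2 s))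
          + max (norm0s h (der h (\<lambda>s. fst (f (r n)) s - g1 s))) (norm0s h (der h (\<lambda>s. snd (f (r n)) s - g2 s)))"
        unfolding d1_def norm1_def P norm0_def by simp
      have le: "d1 h (f (r n)) l \<le> 2 * e'"
        unfolding d1eq using norm0s_le[OF _ a(1)] norm0s_le[OF _ a(2)] norm0s_le[OF _ b] norm0s_le[OF _ c] h by simp
      have ge: "d1 h (f (r n)) l \<ge> 0"
        unfolding d1eq using norm0s_nonneg[OF _ a(1)] norm0s_nonneg[OF _ b] h by simp
      show "norm (d1 h (f (r n)) l - 0) < e" using le ge e unfolding e'_def by simp
    qed
    then show "\<exists>N. \<forall>n\<ge>N. norm (d1 h (f (r n)) l - 0) < e" by blast
  qed
  show "\<exists>l\<in>Bset K. \<exists>r. strict_mono r \<and> (\<lambda>n. d1 h (f (r n)) l) \<longlonglongrightarrow> 0"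
    using lB r dconv by blast
qed

end

context ctx begin

lemma q_lip_ex: "\<exists>Lq\<ge>0. \<forall>a b. a \<in> {0..Vb} \<longrightarrow> b \<in> {0..Vb} \<longrightarrow> \<bar>q a - q b\<bar> \<le> Lq * \<bar>a - b\<bar>"
proof -
  obtain D where D: "\<forall>x\<in>{Rm<..}. (q has_vector_derivative D x) (at x)" "continuous_on {Rm<..} D"
    using q_C1 unfolding C1_differentiable_on_def by blast
  have "continuous_on {0..Vb} D" by (rule continuous_on_subset[OF D(2)]) (use Rm in auto)
  then have "compact (D ` {0..Vb})" by (rule compact_continuous_image) simp
  then have "bounded (D ` {0..Vb})" by (rule compact_imp_bounded)
  then obtain M where M: "\<forall>y\<in>D ` {0..Vb}. norm y \<le> M" unfolding bounded_iff by blast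
  have Mb: "\<And>u. u \<in> {0..Vb} \<Longrightarrow> \<bar>D u\<bar> \<le> M" using M by force
  have dq: "\<And>u. u \<in> {0..Vb} \<Longrightarrow> (q has_real_derivative D u) (at u)"
    using D(1) Rm by (auto simp: has_real_derivative_iff_has_vector_derivative)
  have "\<forall>a b. a \<in> {0..Vb} \<longrightarrow> b \<in> {0..Vb} \<longrightarrow> \<bar>q a - q b\<bar> \<le> max M 0 * \<bar>a - b\<bar>"
  proof (intro allI impI)
    fix a b assume ab: "a \<in> {0..Vb}" "b \<in> {0..Vb}"
    have "\<bar>q a - q b\<bar> \<le> M * \<bar>a - b\<bar>" by (rule lip_from_deriv[OF dq Mb ab])
    also have "\<dots> \<le> max M 0 * \<bar>a - b\<bar>" by (intro mult_right_mono) auto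
    finally show "\<bar>q a - q b\<bar> \<le> max M 0 * \<bar>a - b\<bar>" .
  qed
  then show ?thesis by (intro exI[of _ "max M 0"]) auto
qed

definition Lq where "Lq = (SOME Lq. Lq \<ge> 0 \<and> (\<forall>a b. a \<in> {0..Vb} \<longrightarrow> b \<in> {0..Vb} \<longrightarrow> \<bar>q a - q b\<bar> \<le> Lq * \<bar>a - b\<bar>))"
lemma Lq: "Lq \<ge> 0" "\<And>a b. a \<in> {0..Vb} \<Longrightarrow> b \<in> {0..Vb} \<Longrightarrow> \<bar>q a - q b\<bar> \<le> Lq * \<bar>a - b\<bar>"
proof -
  have ex: "\<exists>L. L \<ge> 0 \<and> (\<forall>a b. a \<in> {0..Vb} \<longrightarrow> b \<in> {0..Vb} \<longrightarrow> \<bar>q a - q b\<bar> \<le> L * \<bar>a - b\<bar>)"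
    using q_lip_ex by blast
  have "Lq \<ge> 0 \<and> (\<forall>a b. a \<in> {0..Vb} \<longrightarrow> b \<in> {0..Vb} \<longrightarrow> \<bar>q a - q b\<bar> \<le> Lq * \<bar>a - b\<bar>)"
    unfolding Lq_def by (rule someI_ex[OF ex])
  then show "Lq \<ge> 0" "\<And>a b. a \<in> {0..Vb} \<Longrightarrow> b \<in> {0..Vb} \<Longrightarrow> \<bar>q a - q b\<bar> \<le> Lq * \<bar>a - b\<bar>" by auto
qed

definition D1 where "D1 = Qb * Wb"
definition D2 where "D2 = Jb + \<mu> * Vb"
definition Rb where "Rb = max Wb Vb + max D1 D2"
definition BB where "BB = {y. y \<in> Uplus h \<and> norm1 h y \<le> Rb}"

lemma Lj_ex: "\<exists>L\<ge>0. \<forall>y\<in>BB. \<forall>y'\<in>BB. \<bar>j y - j y'\<bar> \<le> L * norm0 h (psub y y')"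
proof -
  have bnd: "bounded1 h BB" unfolding bounded1_def BB_def by blast
  have sub: "BB \<subseteq> Uplus h" unfolding BB_def by auto
  show ?thesis by (rule j_lip[rule_format, OF conjI[OF sub bnd]])
qed

definition Lj where "Lj = (SOME L. L \<ge> 0 \<and> (\<forall>y\<in>BB. \<forall>y'\<in>BB. \<bar>j y - j y'\<bar> \<le> L * norm0 h (psub y y')))"
lemma Lj: "Lj \<ge> 0" "\<And>y y'. y \<in> BB \<Longrightarrow> y' \<in> BB \<Longrightarrow> \<bar>j y - j y'\<bar> \<le> Lj * norm0 h (psub y y')"
proof -
  obtain L where "L \<ge> 0 \<and> (\<forall>y\<in>BB. \<forall>y'\<in>BB. \<bar>j y - j y'\<bar> \<le> L * norm0 h (psub y y'))"
    using Lj_ex by blast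
  then have "Lj \<ge> 0 \<and> (\<forall>y\<in>BB. \<forall>y'\<in>BB. \<bar>j y - j y'\<bar> \<le> Lj * norm0 h (psub y y'))"
    unfolding Lj_def by (rule someI)
  then show "Lj \<ge> 0" "\<And>y y'. y \<in> BB \<Longrightarrow> y' \<in> BB \<Longrightarrow> \<bar>j y - j y'\<bar> \<le> Lj * norm0 h (psub y y')" by auto
qed

definition Lw where "Lw = Lq * D2 * Wb + Qb * D1"
definition Lv where "Lv = Lj * max D1 D2 + \<mu> * D2"
definition Kb where "Kb = max (max (max Wb Vb) (max D1 D2)) (max (max Lw Lv) 1)"

lemma consts_nonneg: "Wb \<ge> 0" "Vb \<ge> 0" "D1 \<ge> 0" "D2 \<ge> 0" "Lw \<ge> 0" "Lv \<ge> 0" "Jb \<ge> 0"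
proof -
  show a: "Wb \<ge> 0" "Vb \<ge> 0" "Jb \<ge> 0" using Wb Vb Jb(1) by auto
  show b: "D1 \<ge> 0" "D2 \<ge> 0" unfolding D1_def D2_def using a Qb(1) mu by auto
  show "Lw \<ge> 0" unfolding Lw_def using a b Lq(1) Qb(1) by simp
  have "max D1 D2 \<ge> 0" using b by simp
  then show "Lv \<ge> 0" unfolding Lv_def using b Lj(1) mu by simp
qed

lemma Kb: "Kb > 0" "Wb \<le> Kb" "Vb \<le> Kb" "D1 \<le> Kb" "D2 \<le> Kb" "Lw \<le> Kb" "Lv \<le> Kb"
  unfolding Kb_def by auto

lemma Sflow_X: assumes x: "x \<in> X" and t: "t \<ge> 0" shows "Sflow sol t x \<in> X"
proof -
  have h0: "(0::real) \<in> {-h..0}" using h by simp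
  have "der h (seg (W x) t) 0 = q (V x t) * W x t" using Sflow_C1(2)[OF x t] h0 dW_eq[OF x t] by simp
  moreover have "der h (seg (V x) t) 0 = j (seg (W x) t, seg (V x) t) - \<mu> * V x t"
    using Sflow_C1(4)[OF x t] h0 dV_eq[OF x t] by simp
  ultimately show ?thesis unfolding Xplus_def Fmap_def Sflow_eq using traj_Uplus[OF x t] by (simp add: seg_def)
qed

end

context ctx begin

lemma W_deriv': "x \<in> X \<Longrightarrow> u \<ge> 0 \<Longrightarrow> (W x has_real_derivative dW x u) (at u)"
  using W_deriv dW_eq by simp
lemma V_deriv': "x \<in> X \<Longrightarrow> u \<ge> 0 \<Longrightarrow> (V x has_real_derivative dV x u) (at u)"
  using V_deriv dV_eq by simp


end

context ctx begin

context
  fixes x T assumes x: "x \<in> X" and T: "T \<ge> 0" and TB: "\<forall>s\<ge>T. W x s \<le> Wb \<and> V x s \<le> Vb"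
begin

lemma est_a: "u \<ge> T + h \<Longrightarrow> 0 \<le> W x u \<and> W x u \<le> Wb \<and> 0 \<le> V x u \<and> V x u \<le> Vb"
  using W_nonneg[OF x, of u] V_nonneg[OF x, of u] TB T h by auto

lemma est_b: assumes u: "u \<ge> T + h" shows "\<bar>dW x u\<bar> \<le> D1" "\<bar>dV x u\<bar> \<le> D2"
proof -
  have u0: "u \<ge> 0" using u T h by simp
  have a: "0 \<le> W x u" "W x u \<le> Wb" "0 \<le> V x u" "V x u \<le> Vb" using est_a[OF u] by auto
  have "\<bar>q (V x u)\<bar> \<le> Qb" using qV_bound[OF x] u0 h by simp
  then have "\<bar>q (V x u)\<bar> * \<bar>W x u\<bar> \<le> Qb * Wb" using a by (intro mult_mono) auto
  then show "\<bar>dW x u\<bar> \<le> D1" unfolding dW_eq[OF x u0] D1_def by (simp add: abs_mult)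
  have j0: "j (seg (W x) u, seg (V x) u) \<ge> 0" using j_traj_nonneg[OF x u0] .
  have j1: "j (seg (W x) u, seg (V x) u) \<le> Jb" using j_traj_le[OF x T] TB u by auto
  have "\<mu> * V x u \<le> \<mu> * Vb" using a mu by simp
  moreover have "\<mu> * V x u \<ge> 0" using a mu by simp
  ultimately show "\<bar>dV x u\<bar> \<le> D2" unfolding dV_eq[OF x u0] D2_def using j0 j1 by (simp add: abs_le_iff)
qed

lemma est_c: assumes a: "a \<ge> T + h" and b: "b \<ge> T + h"
  shows "\<bar>W x a - W x b\<bar> \<le> D1 * \<bar>a - b\<bar>" "\<bar>V x a - V x b\<bar> \<le> D2 * \<bar>a - b\<bar>"
proof -
  have ab: "a \<in> {T+h..max a b}" "b \<in> {T+h..max a b}" using a b by auto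
  have z: "\<And>u. u \<in> {T+h..max a b} \<Longrightarrow> u \<ge> 0" using T h by auto
  show "\<bar>W x a - W x b\<bar> \<le> D1 * \<bar>a - b\<bar>"
    by (rule lip_from_deriv[OF _ _ ab]) (use W_deriv'[OF x] z est_b(1) in auto)
  show "\<bar>V x a - V x b\<bar> \<le> D2 * \<bar>a - b\<bar>"
    by (rule lip_from_deriv[OF _ _ ab]) (use V_deriv'[OF x] z est_b(2) in auto)
qed

lemma est_d: assumes a: "a \<ge> T + h" and b: "b \<ge> T + h"
  shows "\<bar>dW x a - dW x b\<bar> \<le> Lw * \<bar>a - b\<bar>"
proof -
  have a0: "a \<ge> 0" "b \<ge> 0" using a b T h by auto
  have ea: "0 \<le> W x a" "W x a \<le> Wb" "0 \<le> V x a" "V x a \<le> Vb" using est_a[OF a] by auto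
  have eb: "0 \<le> W x b" "W x b \<le> Wb" "0 \<le> V x b" "V x b \<le> Vb" using est_a[OF b] by auto
  have "dW x a - dW x b = (q (V x a) - q (V x b)) * W x a + q (V x b) * (W x a - W x b)"
    unfolding dW_eq[OF x a0(1)] dW_eq[OF x a0(2)] by (simp add: algebra_simps)
  then have "\<bar>dW x a - dW x b\<bar> \<le> \<bar>q (V x a) - q (V x b)\<bar> * \<bar>W x a\<bar> + \<bar>q (V x b)\<bar> * \<bar>W x a - W x b\<bar>"
    by (simp add: abs_mult[symmetric] abs_triangle_ineq)
  also have "\<dots> \<le> (Lq * (D2 * \<bar>a - b\<bar>)) * Wb + Qb * (D1 * \<bar>a - b\<bar>)"
  proof (intro add_mono mult_mono)
    have "\<bar>q (V x a) - q (V x b)\<bar> \<le> Lq * \<bar>V x a - V x b\<bar>" using Lq(2) ea eb by simp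
    also have "\<dots> \<le> Lq * (D2 * \<bar>a - b\<bar>)" using est_c(2)[OF a b] Lq(1) by (intro mult_left_mono) auto
    finally show "\<bar>q (V x a) - q (V x b)\<bar> \<le> Lq * (D2 * \<bar>a - b\<bar>)" .
    show "\<bar>W x a\<bar> \<le> Wb" using ea by simp
    show "\<bar>q (V x b)\<bar> \<le> Qb" using qV_bound[OF x] a0 h by simp
    show "\<bar>W x a - W x b\<bar> \<le> D1 * \<bar>a - b\<bar>" using est_c(1)[OF a b] .
    show "0 \<le> Lq * (D2 * \<bar>a - b\<bar>)" using Lq(1) consts_nonneg by simp
    show "0 \<le> Qb" using Qb(1) by simp
  qed auto
  also have "\<dots> = Lw * \<bar>a - b\<bar>" unfolding Lw_def by (simp add: algebra_simps)
  finally show ?thesis .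
qed

lemma traj_BB: assumes u: "u \<ge> T + 2*h" shows "(seg (W x) u, seg (V x) u) \<in> BB"
proof -
  have u0: "u \<ge> 0" using u T h by simp
  have ws: "\<forall>s\<in>{-h..0}. u + s \<ge> T + h" using u by auto
  have b1: "\<forall>s\<in>{-h..0}. \<bar>seg (W x) u s\<bar> \<le> max Wb Vb" "\<forall>s\<in>{-h..0}. \<bar>seg (V x) u s\<bar> \<le> max Wb Vb"
    "\<forall>s\<in>{-h..0}. \<bar>der h (seg (W x) u) s\<bar> \<le> max D1 D2" "\<forall>s\<in>{-h..0}. \<bar>der h (seg (V x) u) s\<bar> \<le> max D1 D2"
  proof (safe)
    fix s assume s: "s \<in> {-h..0}"
    then have us: "u + s \<ge> T + h" using ws by blast
    have e: "0 \<le> W x (u+s)" "W x (u+s) \<le> Wb" "0 \<le> V x (u+s)" "V x (u+s) \<le> Vb" using est_a[OF us] by auto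
    show "\<bar>seg (W x) u s\<bar> \<le> max Wb Vb" "\<bar>seg (V x) u s\<bar> \<le> max Wb Vb"
      unfolding seg_def using e by (simp_all add: le_max_iff_disj)
    have d: "der h (seg (W x) u) s = dW x (u+s)" "der h (seg (V x) u) s = dV x (u+s)"
      using Sflow_C1(2,4)[OF x u0] s by auto
    show "\<bar>der h (seg (W x) u) s\<bar> \<le> max D1 D2" "\<bar>der h (seg (V x) u) s\<bar> \<le> max D1 D2"
      unfolding d using est_b[OF us] by (simp_all add: le_max_iff_disj)
  qed
  note b2 = b1(3,4)
  have "norm1 h (seg (W x) u, seg (V x) u) \<le> max Wb Vb + max D1 D2"
    unfolding norm1_def norm0_def using norm0s_le[OF _ b1(1)] norm0s_le[OF _ b1(2)]
      norm0s_le[OF _ b2(1)] norm0s_le[OF _ b2(2)] h by (simp add: add_mono)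
  then show ?thesis unfolding BB_def Rb_def using traj_Uplus[OF x u0] by simp
qed

lemma est_e: assumes a: "a \<ge> T + 2*h" and b: "b \<ge> T + 2*h"
  shows "\<bar>dV x a - dV x b\<bar> \<le> Lv * \<bar>a - b\<bar>"
proof -
  have a0: "a \<ge> 0" "b \<ge> 0" using a b T h by auto
  have ws: "\<forall>s\<in>{-h..0}. a + s \<ge> T + h \<and> b + s \<ge> T + h" using a b by auto
  have p: "\<forall>s\<in>{-h..0}. \<bar>W x (a + s) - W x (b + s)\<bar> \<le> max D1 D2 * \<bar>a - b\<bar>"
    "\<forall>s\<in>{-h..0}. \<bar>V x (a + s) - V x (b + s)\<bar> \<le> max D1 D2 * \<bar>a - b\<bar>"
  proof -
    show "\<forall>s\<in>{-h..0}. \<bar>W x (a + s) - W x (b + s)\<bar> \<le> max D1 D2 * \<bar>a - b\<bar>"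
    proof
      fix s assume "s \<in> {-h..0}"
      then have "\<bar>W x (a + s) - W x (b + s)\<bar> \<le> D1 * \<bar>(a + s) - (b + s)\<bar>" using est_c(1) ws by blast
      also have "\<dots> = D1 * \<bar>a - b\<bar>" by simp
      also have "\<dots> \<le> max D1 D2 * \<bar>a - b\<bar>" by (intro mult_right_mono) auto
      finally show "\<bar>W x (a + s) - W x (b + s)\<bar> \<le> max D1 D2 * \<bar>a - b\<bar>" .
    qed
    show "\<forall>s\<in>{-h..0}. \<bar>V x (a + s) - V x (b + s)\<bar> \<le> max D1 D2 * \<bar>a - b\<bar>"
    proof
      fix s assume "s \<in> {-h..0}"
      then have "\<bar>V x (a + s) - V x (b + s)\<bar> \<le> D2 * \<bar>(a + s) - (b + s)\<bar>" using est_c(2) ws by blast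
      also have "\<dots> = D2 * \<bar>a - b\<bar>" by simp
      also have "\<dots> \<le> max D1 D2 * \<bar>a - b\<bar>" by (intro mult_right_mono) auto
      finally show "\<bar>V x (a + s) - V x (b + s)\<bar> \<le> max D1 D2 * \<bar>a - b\<bar>" .
    qed
  qed
  have n0: "norm0 h (psub (seg (W x) a, seg (V x) a) (seg (W x) b, seg (V x) b)) \<le> max D1 D2 * \<bar>a - b\<bar>"
    unfolding norm0_def psub_def seg_def using norm0s_le[OF _ p(1)] norm0s_le[OF _ p(2)] h by simp
  have "\<bar>j (seg (W x) a, seg (V x) a) - j (seg (W x) b, seg (V x) b)\<bar> \<le> Lj * (max D1 D2 * \<bar>a - b\<bar>)"
  proof -
    have "\<bar>j (seg (W x) a, seg (V x) a) - j (seg (W x) b, seg (V x) b)\<bar>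
        \<le> Lj * norm0 h (psub (seg (W x) a, seg (V x) a) (seg (W x) b, seg (V x) b))"
      by (rule Lj(2)[OF traj_BB[OF a] traj_BB[OF b]])
    also have "\<dots> \<le> Lj * (max D1 D2 * \<bar>a - b\<bar>)" using n0 Lj(1) by (intro mult_left_mono) auto
    finally show ?thesis .
  qed
  moreover have "\<bar>V x a - V x b\<bar> \<le> D2 * \<bar>a - b\<bar>" using est_c(2) a b T h by simp
  ultimately have "\<bar>dV x a - dV x b\<bar> \<le> Lj * (max D1 D2 * \<bar>a - b\<bar>) + \<mu> * (D2 * \<bar>a - b\<bar>)"
    unfolding dV_eq[OF x a0(1)] dV_eq[OF x a0(2)] using mu
    by (smt (verit, ccfv_SIG) mult_left_mono right_diff_distrib abs_mult abs_of_pos)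
  also have "\<dots> = Lv * \<bar>a - b\<bar>" unfolding Lv_def by (simp add: algebra_simps)
  finally show ?thesis .
qed

lemma traj_good: assumes t: "t \<ge> T + 3*h" shows "Sflow sol t x \<in> Bset Kb"
proof -
  have t0: "t \<ge> 0" using t T h by simp
  have ws: "\<And>s. s \<in> {-h..0} \<Longrightarrow> t + s \<ge> T + 2*h" using t by auto
  have ws1: "\<And>s. s \<in> {-h..0} \<Longrightarrow> t + s \<ge> T + h" using t h by auto
  have gW: "good Kb (seg (W x) t)" unfolding good_def
  proof (intro conjI ballI)
    show "C1s h (seg (W x) t)" using traj_C1(1)[OF x t0] .
    fix s assume s: "s \<in> {-h..0}"
    have dd: "der h (seg (W x) t) s = dW x (t+s)" using Sflow_C1(2)[OF x t0] s by simp
    show "0 \<le> seg (W x) t s" "seg (W x) t s \<le> Kb" using est_a[OF ws1[OF s]] Kb unfolding seg_def by auto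
    show "\<bar>der h (seg (W x) t) s\<bar> \<le> Kb" using est_b(1)[OF ws1[OF s]] Kb dd by simp
    fix s' assume s': "s' \<in> {-h..0}"
    have dd': "der h (seg (W x) t) s' = dW x (t+s')" using Sflow_C1(2)[OF x t0] s' by simp
    have "\<bar>dW x (t+s) - dW x (t+s')\<bar> \<le> Lw * \<bar>(t+s) - (t+s')\<bar>" by (rule est_d[OF ws1[OF s] ws1[OF s']])
    also have "\<dots> = Lw * \<bar>s - s'\<bar>" by simp
    also have "\<dots> \<le> Kb * \<bar>s - s'\<bar>" using Kb by (intro mult_right_mono) auto
    finally show "\<bar>der h (seg (W x) t) s - der h (seg (W x) t) s'\<bar> \<le> Kb * \<bar>s - s'\<bar>" using dd dd' by simp
    have "\<bar>W x (t+s) - W x (t+s') - dW x (t+s') * ((t+s) - (t+s'))\<bar> \<le> Lw * ((t+s) - (t+s'))^2"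
    proof (rule taylor_lip[of "T+h" t])
      show "\<And>u. u \<in> {T+h..t} \<Longrightarrow> (W x has_real_derivative dW x u) (at u)" using W_deriv'[OF x] T h by auto
      show "\<And>u u'. u \<in> {T+h..t} \<Longrightarrow> u' \<in> {T+h..t} \<Longrightarrow> \<bar>dW x u - dW x u'\<bar> \<le> Lw * \<bar>u - u'\<bar>" using est_d by auto
      show "t + s \<in> {T+h..t}" "t + s' \<in> {T+h..t}" using ws1 s s' by auto
    qed
    also have "\<dots> = Lw * (s - s')^2" by simp
    also have "\<dots> \<le> Kb * (s - s')^2" using Kb by (intro mult_right_mono) auto
    finally show "\<bar>seg (W x) t s - seg (W x) t s' - der h (seg (W x) t) s' * (s - s')\<bar> \<le> Kb * (s - s')^2"
      using dd' unfolding seg_def by simp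
  qed
  have gV: "good Kb (seg (V x) t)" unfolding good_def
  proof (intro conjI ballI)
    show "C1s h (seg (V x) t)" using traj_C1(2)[OF x t0] .
    fix s assume s: "s \<in> {-h..0}"
    have dd: "der h (seg (V x) t) s = dV x (t+s)" using Sflow_C1(4)[OF x t0] s by simp
    show "0 \<le> seg (V x) t s" "seg (V x) t s \<le> Kb" using est_a[OF ws1[OF s]] Kb unfolding seg_def by auto
    show "\<bar>der h (seg (V x) t) s\<bar> \<le> Kb" using est_b(2)[OF ws1[OF s]] Kb dd by simp
    fix s' assume s': "s' \<in> {-h..0}"
    have dd': "der h (seg (V x) t) s' = dV x (t+s')" using Sflow_C1(4)[OF x t0] s' by simp
    have "\<bar>dV x (t+s) - dV x (t+s')\<bar> \<le> Lv * \<bar>(t+s) - (t+s')\<bar>" by (rule est_e[OF ws[OF s] ws[OF s']])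
    also have "\<dots> = Lv * \<bar>s - s'\<bar>" by simp
    also have "\<dots> \<le> Kb * \<bar>s - s'\<bar>" using Kb by (intro mult_right_mono) auto
    finally show "\<bar>der h (seg (V x) t) s - der h (seg (V x) t) s'\<bar> \<le> Kb * \<bar>s - s'\<bar>" using dd dd' by simp
    have "\<bar>V x (t+s) - V x (t+s') - dV x (t+s') * ((t+s) - (t+s'))\<bar> \<le> Lv * ((t+s) - (t+s'))^2"
    proof (rule taylor_lip[of "T+2*h" t])
      show "\<And>u. u \<in> {T+2*h..t} \<Longrightarrow> (V x has_real_derivative dV x u) (at u)" using V_deriv'[OF x] T h by auto
      show "\<And>u u'. u \<in> {T+2*h..t} \<Longrightarrow> u' \<in> {T+2*h..t} \<Longrightarrow> \<bar>dV x u - dV x u'\<bar> \<le> Lv * \<bar>u - u'\<bar>" using est_e by auto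
      show "t + s \<in> {T+2*h..t}" "t + s' \<in> {T+2*h..t}" using ws s s' by auto
    qed
    also have "\<dots> = Lv * (s - s')^2" by simp
    also have "\<dots> \<le> Kb * (s - s')^2" using Kb by (intro mult_right_mono) auto
    finally show "\<bar>seg (V x) t s - seg (V x) t s' - der h (seg (V x) t) s' * (s - s')\<bar> \<le> Kb * (s - s')^2"
      using dd' unfolding seg_def by simp
  qed
  show ?thesis unfolding Bset_def using Sflow_X[OF x t0] gW gV unfolding Sflow_eq by simp
qed

end

lemma eventually_in_B: assumes x: "x \<in> X" shows "\<exists>T. \<forall>t\<ge>T. Sflow sol t x \<in> Bset Kb"
proof -
  obtain T where T: "T \<ge> 0" "\<forall>s\<ge>T. W x s \<le> Wb \<and> V x s \<le> Vb" using bounds_eventually[OF x] by blast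
  show ?thesis using traj_good[OF x T] by blast
qed

end

lemma liminf_ge:
  fixes f :: "real \<Rightarrow> real"
  assumes "\<exists>T. \<forall>t\<ge>T. f t \<ge> c" "e < c"
  shows "Liminf at_top (\<lambda>t. ereal (f t)) > ereal e"
proof -
  obtain T where T: "\<forall>t\<ge>T. f t \<ge> c" using assms(1) by blast
  have "ereal c \<le> Liminf at_top (\<lambda>t. ereal (f t))"
    unfolding le_Liminf_iff
  proof (intro allI impI)
    fix y assume y: "y < ereal c"
    have "\<forall>t\<ge>T. y < ereal (f t)" using T y by (meson ereal_less_eq(3) order_less_le_trans)
    then show "\<forall>\<^sub>F t in at_top. y < ereal (f t)" unfolding eventually_at_top_linorder by blast
  qed
  moreover have "ereal e < ereal c" using assms(2) by simp
  ultimately show ?thesis by (meson order_less_le_trans)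
qed

context ctx begin

definition zst :: st where "zst = ((\<lambda>s. 0), (\<lambda>s. 0))"

lemma j_zero_fst: assumes "y \<in> Uplus h" "\<forall>s\<in>{-h..0}. fst y s = 0" shows "j y = 0"
proof -
  have n: "norm0s h (fst y) = 0"
    using norm0s_cong[of h "fst y" "\<lambda>s. 0"] norm0s_const[of h 0] assms(2) h by simp
  have "j y \<le> e" if e: "e > 0" for e
  proof -
    obtain \<delta> where "\<delta> > 0" "\<forall>x\<in>Uplus h. norm0s h (fst x) \<le> \<delta> \<longrightarrow> j x \<le> e" using j_small e by blast
    then show ?thesis using assms(1) n by auto
  qed
  then have "j y \<le> 0" by (meson dense not_le)
  moreover have "j y \<ge> 0" using j_nonneg assms(1) by blast
  ultimately show ?thesis by simp
qed

lemma good_zero: "K \<ge> 0 \<Longrightarrow> good K (\<lambda>s. 0)"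
  unfolding good_def using C1s_const der_const[OF h] by simp

lemma zst_B: "zst \<in> Bset Kb"
proof -
  have U: "zst \<in> Uplus h" unfolding zst_def Uplus_def using C1s_const by simp
  have "j zst = 0" by (rule j_zero_fst[OF U]) (simp add: zst_def)
  moreover have "der h (\<lambda>s. 0) 0 = 0" using der_const[OF h] h by simp
  ultimately have "zst \<in> X" unfolding Xplus_def Fmap_def using U by (simp add: zst_def)
  then show ?thesis unfolding Bset_def using good_zero Kb(1) by (simp add: zst_def)
qed

lemma d1_nonneg: assumes "C1s h (fst x)" "C1s h (snd x)" "C1s h (fst y)" "C1s h (snd y)"
  shows "d1 h x y \<ge> 0"
proof -
  have c: "C1s h (fst (psub x y))" "C1s h (snd (psub x y))" unfolding psub_def using C1s_diff[OF h] assms by auto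
  obtain c1 where c1: "\<forall>s\<in>{-h..0}. \<bar>fst (psub x y) s\<bar> \<le> c1" using C1s_bdd[OF h c(1)] by blast
  obtain c2 where c2: "\<forall>s\<in>{-h..0}. \<bar>der h (fst (psub x y)) s\<bar> \<le> c2" using C1s_der_bdd[OF h c(1)] by blast
  have "norm0 h (psub x y) \<ge> 0" unfolding norm0_def using norm0s_nonneg[OF _ c1] h by simp
  moreover have "norm0 h (der h (fst (psub x y)), der h (snd (psub x y))) \<ge> 0"
    unfolding norm0_def using norm0s_nonneg[OF _ c2] h by simp
  ultimately show ?thesis unfolding d1_def norm1_def by simp
qed

lemma setdist_in: assumes y: "y \<in> Bset K" shows "setdist1 h y (Bset K) = 0"
proof -
  have C: "C1s h (fst b) \<and> C1s h (snd b)" if "b \<in> Bset K" for b using that unfolding Bset_def good_def by auto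
  have nn: "d1 h y b \<ge> 0" if "b \<in> Bset K" for b using C[OF y] C[OF that] d1_nonneg by blast
  have bdd: "bdd_below ((\<lambda>b. d1 h y b) ` Bset K)" by (rule bdd_belowI[of _ 0]) (use nn in auto)
  have "setdist1 h y (Bset K) \<le> d1 h y y" unfolding setdist1_def
    by (rule cINF_lower[OF bdd y])
  moreover have "d1 h y y = 0" by (rule d1_self[OF h])
  moreover have "setdist1 h y (Bset K) \<ge> 0" unfolding setdist1_def
    by (rule cINF_greatest) (use y nn in auto)
  ultimately show ?thesis by simp
qed

lemma attract: assumes x: "x \<in> X" shows "((\<lambda>t. setdist1 h (Sflow sol t x) (Bset Kb)) \<longlongrightarrow> 0) at_top"
proof (rule tendsto_eventually)
  obtain T where "\<forall>t\<ge>T. Sflow sol t x \<in> Bset Kb" using eventually_in_B[OF x] by blast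
  then show "\<forall>\<^sub>F t in at_top. setdist1 h (Sflow sol t x) (Bset Kb) = 0"
    unfolding eventually_at_top_linorder using setdist_in by blast
qed

lemma rho1_flow: "rho1 (Sflow sol t x) = W x t" unfolding rho1_def Sflow_eq seg_def by simp
lemma rhom_flow: "rhom (Sflow sol t x) = min (W x t) (V x t)" unfolding rhom_def Sflow_eq seg_def by simp

lemma pers1: "unif_persistent X (Sflow sol) rho1"
  unfolding unif_persistent_def
proof (intro exI[of _ "\<theta>/2"] conjI ballI impI)
  show "\<theta>/2 > 0" using \<theta>(1) by simp
  fix y assume y: "y \<in> X" "rho1 y > 0"
  then have p: "fst y 0 > 0" unfolding rho1_def by simp
  obtain T where T: "\<forall>s\<ge>T. W y s \<ge> \<theta> \<and> W y s \<le> Wb \<and> V y s \<le> Vb" using W_persist[OF y(1) p] by blast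
  show "Liminf at_top (\<lambda>t. ereal (rho1 (Sflow sol t y))) > ereal (\<theta>/2)"
    unfolding rho1_flow by (rule liminf_ge[where c = \<theta>]) (use T \<theta>(1) in auto)
qed

lemma persm: "unif_persistent X (Sflow sol) rhom"
  unfolding unif_persistent_def
proof (intro exI[of _ "min \<theta> Vlow / 2"] conjI ballI impI)
  show "min \<theta> Vlow / 2 > 0" using \<theta>(1) Vlow by simp
  fix y assume y: "y \<in> X" "rhom y > 0"
  then have p: "fst y 0 > 0" unfolding rhom_def by simp
  obtain T where T: "\<forall>s\<ge>T. W y s \<ge> \<theta> \<and> V y s \<ge> Vlow" using V_persist[OF y(1) p] by blast
  have "\<forall>t\<ge>T. min (W y t) (V y t) \<ge> min \<theta> Vlow" using T by (simp add: min_le_iff_disj)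
  then show "Liminf at_top (\<lambda>t. ereal (rhom (Sflow sol t y))) > ereal (min \<theta> Vlow / 2)"
    unfolding rhom_flow by (intro liminf_ge[where c = "min \<theta> Vlow"]) (use \<theta>(1) Vlow in auto)
qed

lemma B_bounded: "bounded1 h (Bset Kb)"
  unfolding bounded1_def Bset_def by (intro exI[of _ "2*Kb"]) (auto intro: good_norm1)

lemma const_C1: "C1s h (\<lambda>s. c)" by (rule C1s_const)

lemma eq_from_zero: assumes z: "z > 0" "q z = 0" shows "\<exists>a>0. Fmap q j \<mu> ((\<lambda>_. a), (\<lambda>_. z)) = (0, 0)"
proof -
  define K where "K = \<mu> * z + 1"
  have Kp: "K > 0" unfolding K_def using mu z by (simp add: add_pos_nonneg)
  obtain L where L: "\<forall>x\<in>Uplus h. (\<forall>s\<in>{-h..0}. fst x s \<ge> L) \<longrightarrow> j x \<ge> K" using j_large Kp by blast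
  define A where "A = max L 1"
  have A: "A > 0" "A \<ge> L" unfolding A_def by auto
  define S :: "st set" where "S = {y. \<exists>a\<in>{0..A}. y = ((\<lambda>_. a), (\<lambda>_. z))}"
  have SU: "S \<subseteq> Uplus h" unfolding S_def Uplus_def using const_C1 z by auto
  have n0: "norm0 h ((\<lambda>_. a), (\<lambda>_. b)) = max \<bar>a\<bar> \<bar>b\<bar>" for a b :: real unfolding norm0_def using norm0s_const h by simp
  have dc: "norm0s h (der h (\<lambda>_. c)) = 0" for c :: real
    using norm0s_cong[of h "der h (\<lambda>_. c)" "\<lambda>s. 0"] der_const[OF h] norm0s_const[of h 0] h by auto
  have Sb: "bounded1 h S" unfolding bounded1_def S_def
  proof (intro exI[of _ "A + z"] ballI)
    fix y :: st assume "y \<in> {y. \<exists>a\<in>{0..A}. y = ((\<lambda>_. a), (\<lambda>_. z))}"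
    then obtain a where a: "a \<in> {0..A}" "y = ((\<lambda>_. a), (\<lambda>_. z))" by blast
    have "norm1 h y = max \<bar>a\<bar> \<bar>z\<bar>" unfolding a(2) norm1_def n0 using dc unfolding norm0_def by simp
    then show "norm1 h y \<le> A + z" using a z A by auto
  qed
  obtain Lj' where Lj': "Lj' \<ge> 0" "\<forall>x\<in>S. \<forall>y\<in>S. \<bar>j x - j y\<bar> \<le> Lj' * norm0 h (psub x y)"
    using j_lip SU Sb by blast
  define \<phi> where "\<phi> a = j ((\<lambda>_. a), (\<lambda>_. z))" for a :: real
  have lip: "\<bar>\<phi> a - \<phi> b\<bar> \<le> Lj' * \<bar>a - b\<bar>" if "a \<in> {0..A}" "b \<in> {0..A}" for a b
  proof -
    have m: "((\<lambda>_. a), (\<lambda>_. z)) \<in> S" "((\<lambda>_. b), (\<lambda>_. z)) \<in> S" unfolding S_def using that by auto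
    have "psub ((\<lambda>_. a), (\<lambda>_. z)) ((\<lambda>_. b), (\<lambda>_. z)) = ((\<lambda>_. a - b), (\<lambda>_. 0))" unfolding psub_def by simp
    then have "norm0 h (psub ((\<lambda>_. a), (\<lambda>_. z)) ((\<lambda>_. b), (\<lambda>_. z))) = \<bar>a - b\<bar>" using n0 by simp
    then show ?thesis unfolding \<phi>_def using Lj'(2) m by metis
  qed
  have cont: "continuous_on {0..A} \<phi>" by (rule lip_cont[OF lip Lj'(1)])
  have m0: "((\<lambda>_. 0), (\<lambda>_. z)) \<in> S" "((\<lambda>_. A), (\<lambda>_. z)) \<in> S" unfolding S_def using A by auto
  have p0: "\<phi> 0 = 0" unfolding \<phi>_def by (rule j_zero_fst) (use SU m0 in auto)
  have "((\<lambda>_. A), (\<lambda>_. z)) \<in> Uplus h" using SU m0 by auto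
  moreover have "\<forall>s\<in>{-h..0}. L \<le> fst ((\<lambda>_. A), (\<lambda>_. z)) s" using A by simp
  ultimately have pA: "\<phi> A \<ge> K" unfolding \<phi>_def using L by blast
  obtain a where a: "0 \<le> a" "a \<le> A" "\<phi> a = \<mu> * z"
    using IVT'[of \<phi> 0 "\<mu> * z" A] p0 pA cont A mu z unfolding K_def by (auto simp: less_imp_le)
  have "a \<noteq> 0" using a p0 mu z by auto
  then have "a > 0" using a by simp
  moreover have "Fmap q j \<mu> ((\<lambda>_. a), (\<lambda>_. z)) = (0, 0)" unfolding Fmap_def using a(3) z unfolding \<phi>_def by simp
  ultimately show ?thesis by blast
qed

lemma q_zero: "\<exists>z>0. q z = 0"
proof -
  have c: "continuous_on {0..zs+1} q" by (rule continuous_on_subset[OF q_cont]) (use Rm dq(2) in auto)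
  have "q (zs + 1) \<le> 0" using dq(3)[of "zs+1"] dq(1) by simp
  then obtain z where z: "0 \<le> z" "z \<le> zs + 1" "q z = 0"
    using IVT2'[of q "zs+1" 0 0] c q0 dq(2) by auto
  have "z \<noteq> 0" using z q0 by auto
  then show ?thesis using z by (intro exI[of _ z]) auto
qed

lemma main: "unif_persistent (Xplus h q j \<mu>) (Sflow sol) rho1
       \<and> unif_persistent (Xplus h q j \<mu>) (Sflow sol) rhom
       \<and> (\<exists>B. B \<noteq> {} \<and> B \<subseteq> Xplus h q j \<mu> \<and> compact1 h B \<and>
            (\<forall>x\<in>Xplus h q j \<mu>. ((\<lambda>t. setdist1 h (Sflow sol t x) B) \<longlongrightarrow> 0) at_top))
       \<and> point_dissipative h (Xplus h q j \<mu>) (Sflow sol)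
       \<and> (\<exists>a>0. \<exists>b>0. Fmap q j \<mu> ((\<lambda>_. a), (\<lambda>_. b)) = (0, 0))
       \<and> (\<forall>z>0. q z = 0 \<longrightarrow> (\<exists>a>0. Fmap q j \<mu> ((\<lambda>_. a), (\<lambda>_. z)) = (0, 0)))"
proof (intro conjI)
  show "unif_persistent X (Sflow sol) rho1" by (rule pers1)
  show "unif_persistent X (Sflow sol) rhom" by (rule persm)
  have sub: "Bset Kb \<subseteq> X" unfolding Bset_def by auto
  show "\<exists>B. B \<noteq> {} \<and> B \<subseteq> X \<and> compact1 h B \<and> (\<forall>x\<in>X. ((\<lambda>t. setdist1 h (Sflow sol t x) B) \<longlongrightarrow> 0) at_top)"
    using zst_B sub compact_B[OF Kb(1)] attract by blast
  show "point_dissipative h X (Sflow sol)" unfolding point_dissipative_def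
    using sub B_bounded attract by blast
  show "\<forall>z>0. q z = 0 \<longrightarrow> (\<exists>a>0. Fmap q j \<mu> ((\<lambda>_. a), (\<lambda>_. z)) = (0, 0))" using eq_from_zero by blast
  obtain z where "z > 0" "q z = 0" using q_zero by blast
  then show "\<exists>a>0. \<exists>b>0. Fmap q j \<mu> ((\<lambda>_. a), (\<lambda>_. b)) = (0, 0)" using eq_from_zero by blast
qed

end

theorem theorem6:
  fixes h Rm \<mu> :: real and q :: "real \<Rightarrow> real" and j :: "st \<Rightarrow> real" and sol :: "st \<Rightarrow> st"
  assumes h: "h > 0" and Rm: "Rm < 0" and mu: "\<mu> > 0"
    and j_fun: "\<forall>x\<in>Uset h Rm. \<forall>y\<in>Uset h Rm. (\<forall>s\<in>{-h..0}. fst x s = fst y s \<and> snd x s = snd y s) \<longrightarrow> j x = j y"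
    and j_C1: "\<exists>Dj :: st \<Rightarrow> st \<Rightarrow> real.
        (\<forall>x\<in>Uset h Rm. \<forall>a b. \<forall>c. Cont h a \<and> Cont h b \<longrightarrow>
            Dj x (padd a b) = Dj x a + Dj x b \<and> Dj x (pscale c a) = c * Dj x a)
      \<and> (\<forall>x\<in>Uset h Rm. \<forall>\<epsilon>>0. \<exists>\<delta>>0. \<forall>y. C1s h (fst y) \<and> C1s h (snd y) \<and> norm1 h y < \<delta>
            \<and> padd x y \<in> Uset h Rm \<longrightarrow> \<bar>j (padd x y) - j x - Dj x y\<bar> \<le> \<epsilon> * norm1 h y)
      \<and> (\<forall>x\<in>Uset h Rm. \<forall>\<epsilon>>0. \<exists>\<delta>>0. \<forall>x'\<in>Uset h Rm. d1 h x' x < \<delta> \<longrightarrow>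
            (\<forall>y. C1s h (fst y) \<and> C1s h (snd y) \<longrightarrow> \<bar>Dj x' y - Dj x y\<bar> \<le> \<epsilon> * norm1 h y))
      \<and> (\<forall>x\<in>Uset h Rm. \<forall>y. Cont h y \<longrightarrow> (\<forall>\<epsilon>>0. \<exists>\<delta>>0. \<forall>x'\<in>Uset h Rm. \<forall>y'. Cont h y' \<and>
            d1 h x' x < \<delta> \<and> norm0 h (psub y' y) < \<delta> \<longrightarrow> \<bar>Dj x' y' - Dj x y\<bar> < \<epsilon>))"
    and j_lip: "\<forall>B. B \<subseteq> Uplus h \<and> bounded1 h B \<longrightarrow>
        (\<exists>L\<ge>0. \<forall>x\<in>B. \<forall>y\<in>B. \<bar>j x - j y\<bar> \<le> L * norm0 h (psub x y))"
    and j_nonneg: "\<forall>x\<in>Uplus h. j x \<ge> 0"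
    and j_bdd: "\<forall>B1 B2. B1 \<times> B2 \<subseteq> Uplus h \<and> bounded1s h B1 \<longrightarrow> bounded (j ` (B1 \<times> B2))"
    and q_bdd: "bounded (q ` {Rm<..})"
    and q_C1: "q C1_differentiable_on {Rm<..}"
    and j_small: "\<forall>\<epsilon>>0. \<exists>\<delta>>0. \<forall>x\<in>Uplus h. norm0s h (fst x) \<le> \<delta> \<longrightarrow> j x \<le> \<epsilon>"
    and q0: "q 0 > 0"
    and q_neg: "\<exists>\<delta>>0. \<exists>zs\<ge>0. \<forall>z\<ge>zs. q z \<le> -\<delta>"
    and j_large: "\<forall>K>0. \<exists>L. \<forall>x\<in>Uplus h. (\<forall>s\<in>{-h..0}. fst x s \<ge> L) \<longrightarrow> j x \<ge> K"
    and sol_ex: "\<forall>x\<in>Xplus h q j \<mu>. is_sol h Rm q j \<mu> x (fst (sol x)) (snd (sol x))"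
    and sol_uniq: "\<forall>x\<in>Xplus h q j \<mu>. \<forall>w v. is_sol h Rm q j \<mu> x w v \<longrightarrow>
        (\<forall>t\<ge>-h. w t = fst (sol x) t \<and> v t = snd (sol x) t)"
    and sol_cont: "\<forall>t0\<ge>0. \<forall>x0\<in>Xplus h q j \<mu>. \<forall>\<epsilon>>0. \<exists>\<delta>>0. \<forall>t\<ge>0. \<forall>x\<in>Xplus h q j \<mu>.
        \<bar>t - t0\<bar> < \<delta> \<and> d1 h x x0 < \<delta> \<longrightarrow> d1 h (Sflow sol t x) (Sflow sol t0 x0) < \<epsilon>"
  shows "unif_persistent (Xplus h q j \<mu>) (Sflow sol) rho1
       \<and> unif_persistent (Xplus h q j \<mu>) (Sflow sol) rhom
       \<and> (\<exists>B. B \<noteq> {} \<and> B \<subseteq> Xplus h q j \<mu> \<and> compact1 h B \<and>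
            (\<forall>x\<in>Xplus h q j \<mu>. ((\<lambda>t. setdist1 h (Sflow sol t x) B) \<longlongrightarrow> 0) at_top))
       \<and> point_dissipative h (Xplus h q j \<mu>) (Sflow sol)
       \<and> (\<exists>a>0. \<exists>b>0. Fmap q j \<mu> ((\<lambda>_. a), (\<lambda>_. b)) = (0, 0))
       \<and> (\<forall>z>0. q z = 0 \<longrightarrow> (\<exists>a>0. Fmap q j \<mu> ((\<lambda>_. a), (\<lambda>_. z)) = (0, 0)))"
proof -
  interpret ctx h Rm \<mu> q j sol
    using h Rm mu j_fun j_C1 j_lip j_nonneg j_bdd q_bdd q_C1 j_small q0 q_neg j_large sol_ex sol_uniq sol_cont
    by (rule ctx.intro)
  show ?thesis by (rule main)
qed

end
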